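(* Let $X$ be a proper complete CAT(0) space with $\partial X$ homeomorphic to the join $C_1 * C_2$ of two Cantor sets, and let $G<\mathrm{Isom}(X)$ act geometrically on $X$. Then either $G$ or a subgroup of $G$ of index $2$ stabilizes each of $C_1$ and $C_2$ (for its induced action on $\partial X$).
   Context: $C_1, C_2$ are identified with their images in $\partial X$ under the homeomorphism $\partial X\cong C_1*C_2$. Each isometry $g$ of $X$ extends to a homeomorphism $\bar g$ of $\partial X$ (cone topology). A geometric action is proper and cocompact by isometries. *)

theory Defs
  imports "HOL-Analysis.Analysis"
begin

definition proper_metric_space :: "'a::metric_space itself \<Rightarrow> bool" where
  "proper_metric_space _ \<longleftrightarrow> (\<forall>(x::'a) r. compact (cball x r))"

text \<open>A geodesic from x to y: an isometric map of [0, dist x y] into the space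
  (values outside the interval are irrelevant).\<close>
definition geodesic :: "(real \<Rightarrow> 'a::metric_space) \<Rightarrow> 'a \<Rightarrow> 'a \<Rightarrow> bool" where
  "geodesic g x y \<longleftrightarrow> g 0 = x \<and> g (dist x y) = y \<and>
     (\<forall>s\<in>{0..dist x y}. \<forall>t\<in>{0..dist x y}. dist (g s) (g t) = \<bar>s - t\<bar>)"

definition geodesic_space :: "'a::metric_space itself \<Rightarrow> bool" where
  "geodesic_space _ \<longleftrightarrow> (\<forall>x y::'a. \<exists>g. geodesic g x y)"

definition triangle_pairs ::
  "(real \<Rightarrow> 'a::metric_space) \<Rightarrow> 'a \<Rightarrow> 'a \<Rightarrow> complex \<Rightarrow> complex \<Rightarrow> ('a \<times> complex) set" where
  "triangle_pairs g x y x' y' =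
     {(g t, x' + of_real (t / dist x y) * (y' - x')) | t. t \<in> {0..dist x y}}"

definition CAT0_space :: "'a::metric_space itself \<Rightarrow> bool" where
  "CAT0_space T \<longleftrightarrow> geodesic_space T \<and>
     (\<forall>(x::'a) y z g1 g2 g3 x' y' z'.
        geodesic g1 x y \<and> geodesic g2 y z \<and> geodesic g3 z x \<and>
        dist x' y' = dist x y \<and> dist y' z' = dist y z \<and> dist z' x' = dist z x \<longrightarrow>
        (let P = triangle_pairs g1 x y x' y' \<union> triangle_pairs g2 y z y' z'
                 \<union> triangle_pairs g3 z x z' x'
         in \<forall>(p, p')\<in>P. \<forall>(q, q')\<in>P. dist p q \<le> dist p' q'))"

definition geodesic_ray :: "(real \<Rightarrow> 'a::metric_space) \<Rightarrow> bool" where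
  "geodesic_ray c \<longleftrightarrow> (\<forall>s\<ge>0. \<forall>t\<ge>0. dist (c s) (c t) = \<bar>s - t\<bar>)"

definition asymptotic :: "(real \<Rightarrow> 'a::metric_space) \<Rightarrow> (real \<Rightarrow> 'a) \<Rightarrow> bool" where
  "asymptotic c c' \<longleftrightarrow> (\<exists>K. \<forall>t\<ge>0. dist (c t) (c' t) \<le> K)"

definition ray_class :: "(real \<Rightarrow> 'a::metric_space) \<Rightarrow> (real \<Rightarrow> 'a) set" where
  "ray_class c = {c'. geodesic_ray c' \<and> asymptotic c c'}"

definition visual_boundary :: "'a::metric_space itself \<Rightarrow> (real \<Rightarrow> 'a) set set" where
  "visual_boundary _ = {ray_class c | c. geodesic_ray (c :: real \<Rightarrow> 'a)}"

definition cone_nbhd :: "'a::metric_space \<Rightarrow> (real \<Rightarrow> 'a) set \<Rightarrow> real \<Rightarrow> real \<Rightarrow> (real \<Rightarrow> 'a) set set" where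
  "cone_nbhd x0 \<xi> r e = {\<eta> \<in> visual_boundary TYPE('a).
      \<exists>c\<in>\<xi>. \<exists>c'\<in>\<eta>. c 0 = x0 \<and> c' 0 = x0 \<and> dist (c r) (c' r) < e}"

definition cone_topology :: "'a::metric_space \<Rightarrow> (real \<Rightarrow> 'a) set topology" where
  "cone_topology x0 = topology_generated_by
     {cone_nbhd x0 \<xi> r e | \<xi> r e. \<xi> \<in> visual_boundary TYPE('a) \<and> r > 0 \<and> e > 0}"

definition isometry :: "('a::metric_space \<Rightarrow> 'a) \<Rightarrow> bool" where
  "isometry g \<longleftrightarrow> surj g \<and> (\<forall>x y. dist (g x) (g y) = dist x y)"

definition isometry_group :: "('a::metric_space \<Rightarrow> 'a) set \<Rightarrow> bool" where
  "isometry_group G \<longleftrightarrow> id \<in> G \<and> (\<forall>g\<in>G. isometry g) \<and>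
     (\<forall>g\<in>G. \<forall>h\<in>G. g \<circ> h \<in> G) \<and> (\<forall>g\<in>G. inv g \<in> G)"

definition is_subgroup :: "('a \<Rightarrow> 'a) set \<Rightarrow> ('a \<Rightarrow> 'a) set \<Rightarrow> bool" where
  "is_subgroup H G \<longleftrightarrow> H \<subseteq> G \<and> id \<in> H \<and>
     (\<forall>g\<in>H. \<forall>h\<in>H. g \<circ> h \<in> H) \<and> (\<forall>g\<in>H. inv g \<in> H)"

definition proper_action :: "('a::metric_space \<Rightarrow> 'a) set \<Rightarrow> bool" where
  "proper_action G \<longleftrightarrow> (\<forall>x. \<exists>r>0. finite {g\<in>G. g ` ball x r \<inter> ball x r \<noteq> {}})"

definition cocompact_action :: "('a::metric_space \<Rightarrow> 'a) set \<Rightarrow> bool" where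
  "cocompact_action G \<longleftrightarrow> (\<exists>K. compact K \<and> (\<Union>g\<in>G. g ` K) = UNIV)"

definition geometric_action :: "('a::metric_space \<Rightarrow> 'a) set \<Rightarrow> bool" where
  "geometric_action G \<longleftrightarrow> proper_action G \<and> cocompact_action G"

definition boundary_map :: "('a \<Rightarrow> 'a) \<Rightarrow> (real \<Rightarrow> 'a) set \<Rightarrow> (real \<Rightarrow> 'a) set" where
  "boundary_map g \<xi> = (\<lambda>c. g \<circ> c) ` \<xi>"

definition cantor_set :: "real set" where
  "cantor_set = (\<lambda>a::nat \<Rightarrow> bool. \<Sum>n. (if a n then 2 else 0) / 3 ^ Suc n) ` UNIV"

definition is_cantor_subspace :: "'b topology \<Rightarrow> 'b set \<Rightarrow> bool" where
  "is_cantor_subspace T C \<longleftrightarrow> C \<subseteq> topspace T \<and>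
     subtopology T C homeomorphic_space subtopology euclideanreal cantor_set"

text \<open>T is the join C1 * C2 with C1, C2 identified with their images: the map
  (a, b, t) to the point of T is a quotient map from C1 x C2 x [0,1] onto T realising
  exactly the join identifications, with (a,b,0) going to a and (a,b,1) going to b.\<close>
definition join_of :: "'b topology \<Rightarrow> 'b set \<Rightarrow> 'b set \<Rightarrow> bool" where
  "join_of T C1 C2 \<longleftrightarrow> C1 \<subseteq> topspace T \<and> C2 \<subseteq> topspace T \<and>
     (\<exists>q. quotient_map
            (prod_topology (subtopology T C1)
               (prod_topology (subtopology T C2) (top_of_set {0..1::real}))) T q \<and>
          (\<forall>a\<in>C1. \<forall>b\<in>C2. q (a, b, 0) = a \<and> q (a, b, 1) = b) \<and>
          (\<forall>a\<in>C1. \<forall>b\<in>C2. \<forall>t\<in>{0..1}. \<forall>a'\<in>C1. \<forall>b'\<in>C2. \<forall>t'\<in>{0..1}.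
              q (a, b, t) = q (a', b', t') \<longleftrightarrow>
              (t = t' \<and> ((0 < t \<and> t < 1 \<and> a = a' \<and> b = b') \<or> (t = 0 \<and> a = a')
                          \<or> (t = 1 \<and> b = b')))))"

end

theory Submission
  imports Defs
begin

lemma comparison_point:
  fixes L1 L2 B :: real
  assumes "L2 \<ge> 0" "B \<ge> 0" "B \<le> L1 + L2" "L1 \<le> B + L2" "L2 \<le> B + L1" "L1 > 0"
  shows "\<exists>z'::complex. cmod z' = L2 \<and> cmod (of_real L1 - z') = B \<and> Re z' = (L1^2 + L2^2 - B^2)/(2*L1)"
proof -
  define u where "u = (L1^2 + L2^2 - B^2)/(2*L1)"
  have "2*L1*u = L1^2 + L2^2 - B^2" using assms(6) unfolding u_def by (simp add: field_simps)
  have "(2*L1*u)^2 \<le> (2*L1*L2)^2"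
  proof -
    have a: "(L1 - L2)^2 \<le> B^2" using assms by (simp add: abs_le_square_iff[symmetric])
    have b: "B^2 \<le> (L1 + L2)^2" using assms by (simp add: abs_le_square_iff[symmetric])
    have c: "\<bar>L1^2 + L2^2 - B^2\<bar> \<le> 2*L1*L2"
      using a b assms by (simp add: power2_eq_square algebra_simps abs_le_iff)
    have "(L1^2 + L2^2 - B^2)^2 \<le> (2*L1*L2)^2"
      using c assms by (simp add: abs_le_square_iff[symmetric])
    thus ?thesis using \<open>2*L1*u = _\<close> by simp
  qed
  hence "(2*L1)^2 * u^2 \<le> (2*L1)^2 * L2^2" by (simp add: power_mult_distrib)
  hence uL: "u^2 \<le> L2^2" using assms(6) by simp
  define v where "v = sqrt (L2^2 - u^2)"
  have v2: "v^2 = L2^2 - u^2" unfolding v_def using uL by simp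
  define z where "z = Complex u v"
  have "cmod z = sqrt (u^2 + v^2)" unfolding z_def cmod_def by simp
  also have "\<dots> = L2" using v2 assms(1) by simp
  finally have 1: "cmod z = L2" .
  have "cmod (of_real L1 - z) = sqrt ((L1 - u)^2 + v^2)" unfolding z_def cmod_def by simp
  also have "(L1 - u)^2 + v^2 = B^2" using v2 \<open>2*L1*u = _\<close> by (simp add: power2_eq_square algebra_simps)
  finally have 2: "cmod (of_real L1 - z) = B" using assms(2) by simp
  show ?thesis using 1 2 by (intro exI[of _ z]) (simp add: z_def u_def)
qed

lemma geodesic_rev:
  assumes "geodesic g x y"
  shows "geodesic (\<lambda>s. g (dist x y - s)) y x"
  using assms unfolding geodesic_def by (auto simp: dist_commute abs_minus_commute)

lemma geodesic_dist:
  assumes "geodesic g x y" "s \<in> {0..dist x y}"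
  shows "dist x (g s) = s"
proof -
  have "dist (g 0) (g s) = \<bar>0 - s\<bar>" using assms unfolding geodesic_def by auto
  thus ?thesis using assms unfolding geodesic_def by auto
qed

lemma cat0_common_start:
  fixes p q q' :: "'a::metric_space"
  assumes cat: "CAT0_space TYPE('a)"
  and g1: "geodesic s1 p q" and g2: "geodesic s2 p q'"
  and pos: "dist p q > 0"
  and z1: "cmod z = dist p q'" and z2: "cmod (of_real (dist p q) - z) = dist q q'"
  and s: "s \<in> {0..dist p q}" and u: "u \<in> {0..dist p q'}"
  shows "dist (s1 s) (s2 u) \<le> cmod (of_real s - of_real (u / dist p q') * z)"
proof -
  obtain g where g: "geodesic g q q'" using cat unfolding CAT0_space_def geodesic_space_def by blast
  define r where "r = (\<lambda>t. s2 (dist p q' - t))"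
  have g3: "geodesic r q' p" unfolding r_def using geodesic_rev[OF g2] .
  define y' where "y' = (of_real (dist p q) :: complex)"
  have d1: "dist (0::complex) y' = dist p q" unfolding y'_def dist_complex_def by simp
  have d2: "dist y' z = dist q q'" unfolding y'_def dist_complex_def using z2 by simp
  have d3: "dist z 0 = dist q' p" using z1 by (simp add: dist_complex_def dist_commute)
  define P where "P = triangle_pairs s1 p q 0 y' \<union> triangle_pairs g q q' y' z \<union> triangle_pairs r q' p z 0"
  have C: "\<forall>(x::'a) y z g1 g2 g3 x' y' z'.
        geodesic g1 x y \<and> geodesic g2 y z \<and> geodesic g3 z x \<and>
        dist x' y' = dist x y \<and> dist y' z' = dist y z \<and> dist z' x' = dist z x \<longrightarrow>
        (let P = triangle_pairs g1 x y x' y' \<union> triangle_pairs g2 y z y' z'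
                 \<union> triangle_pairs g3 z x z' x'
         in \<forall>(p, p')\<in>P. \<forall>(q, q')\<in>P. dist p q \<le> dist p' q')"
    using cat unfolding CAT0_space_def by blast
  have H: "\<forall>(a, a')\<in>P. \<forall>(b, b')\<in>P. dist a b \<le> dist a' b'"
    using C[rule_format, of s1 p q g q' r 0 y' z, OF conjI[OF g1 conjI[OF g conjI[OF g3 conjI[OF d1 conjI[OF d2 d3]]]]]]
    unfolding P_def Let_def .
  have m1: "(s1 s, of_real s) \<in> P"
  proof -
    have "(s1 s, 0 + of_real (s / dist p q) * (y' - 0)) \<in> triangle_pairs s1 p q 0 y'"
      unfolding triangle_pairs_def using s by blast
    moreover have "0 + of_real (s / dist p q) * (y' - 0) = (of_real s :: complex)"
      unfolding y'_def using pos by (simp add: field_simps)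
    ultimately show ?thesis unfolding P_def by auto
  qed
  have m2: "(s2 u, of_real (u / dist p q') * z) \<in> P"
  proof -
    define t where "t = dist p q' - u"
    have t: "t \<in> {0..dist q' p}" using u unfolding t_def by (simp add: dist_commute)
    have "(r t, z + of_real (t / dist q' p) * (0 - z)) \<in> triangle_pairs r q' p z 0"
      unfolding triangle_pairs_def using t by blast
    moreover have "r t = s2 u" unfolding r_def t_def by simp
    moreover have "z + of_real (t / dist q' p) * (0 - z) = of_real (u / dist p q') * z"
    proof (cases "dist p q' = 0")
      case True thus ?thesis using z1 u t_def by simp
    next
      case False
      have "z + of_real (t / dist q' p) * (0 - z) = of_real (1 - t / dist p q') * z"
        by (simp add: dist_commute algebra_simps)
      also have "1 - t / dist p q' = u / dist p q'" unfolding t_def using False by (simp add: field_simps)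
      finally show ?thesis .
    qed
    ultimately show ?thesis unfolding P_def by auto
  qed
  have "dist (s1 s) (s2 u) \<le> dist (of_real s :: complex) (of_real (u / dist p q') * z)"
    using H m1 m2 by fast
  thus ?thesis by (simp add: dist_complex_def)
qed



lemma geodesic_0: "geodesic g x y \<Longrightarrow> g 0 = x" unfolding geodesic_def by simp
lemma geodesic_end: "geodesic g x y \<Longrightarrow> g (dist x y) = y" unfolding geodesic_def by simp
lemma geodesic_d: "geodesic g x y \<Longrightarrow> s \<in> {0..dist x y} \<Longrightarrow> t \<in> {0..dist x y} \<Longrightarrow> dist (g s) (g t) = \<bar>s - t\<bar>"
  unfolding geodesic_def by blast

lemma conv_common:
  fixes p q q' :: "'a::metric_space"
  assumes cat: "CAT0_space TYPE('a)"
  and g1: "geodesic s1 p q" and g2: "geodesic s2 p q'"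
  and l: "0 \<le> l" "l \<le> 1"
  shows "dist (s1 (l * dist p q)) (s2 (l * dist p q')) \<le> l * dist q q'"
proof (cases "dist p q = 0")
  case True
  hence "q = p" by simp
  have "s1 (l * dist p q) = p" using True geodesic_0[OF g1] by simp
  moreover have "dist p (s2 (l * dist p q')) = l * dist p q'"
    using geodesic_dist[OF g2, of "l * dist p q'"] l mult_left_le_one_le[of "dist p q'" l] by simp
  ultimately show ?thesis using \<open>q = p\<close> by simp
next
  case False
  hence pos: "dist p q > 0" by simp
  show ?thesis
  proof (cases "dist p q' = 0")
    case True
    hence "q' = p" by simp
    have "s2 (l * dist p q') = p" using True geodesic_0[OF g2] by simp
    moreover have "dist p (s1 (l * dist p q)) = l * dist p q"
      using geodesic_dist[OF g1, of "l * dist p q"] l mult_left_le_one_le[of "dist p q" l] by simp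
    ultimately show ?thesis using \<open>q' = p\<close> by (simp add: dist_commute)
  next
    case False
    obtain z where z: "cmod z = dist p q'" "cmod (of_real (dist p q) - z) = dist q q'"
      using comparison_point[of "dist p q'" "dist q q'" "dist p q"] pos
        dist_triangle[of p q q'] dist_triangle[of p q' q] dist_triangle[of q q' p]
      by (auto simp: dist_commute)
    have s: "l * dist p q \<in> {0..dist p q}" using l mult_left_le_one_le[of "dist p q" l] by simp
    have u: "l * dist p q' \<in> {0..dist p q'}" using l mult_left_le_one_le[of "dist p q'" l] by simp
    have "dist (s1 (l * dist p q)) (s2 (l * dist p q')) \<le>
          cmod (of_real (l * dist p q) - of_real (l * dist p q' / dist p q') * z)"
      using cat0_common_start[OF cat g1 g2 pos z s u] .
    also have "of_real (l * dist p q) - of_real (l * dist p q' / dist p q') * z = of_real l * (of_real (dist p q) - z)"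
      using False by (simp add: algebra_simps)
    also have "cmod \<dots> = l * dist q q'" using z l by (simp add: norm_mult)
    finally show ?thesis .
  qed
qed

lemma conv_general:
  fixes p q p' q' :: "'a::metric_space"
  assumes cat: "CAT0_space TYPE('a)"
  and g1: "geodesic s1 p q" and g2: "geodesic s2 p' q'"
  and l: "0 \<le> l" "l \<le> 1"
  shows "dist (s1 (l * dist p q)) (s2 (l * dist p' q')) \<le> (1 - l) * dist p p' + l * dist q q'"
proof -
  obtain s3 where g3: "geodesic s3 p q'" using cat unfolding CAT0_space_def geodesic_space_def by blast
  have A: "dist (s1 (l * dist p q)) (s3 (l * dist p q')) \<le> l * dist q q'"
    using conv_common[OF cat g1 g3 l] .
  have r3: "geodesic (\<lambda>s. s3 (dist p q' - s)) q' p" using geodesic_rev[OF g3] .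
  have r2: "geodesic (\<lambda>s. s2 (dist p' q' - s)) q' p'" using geodesic_rev[OF g2] .
  have B: "dist (s3 (dist p q' - (1 - l) * dist q' p)) (s2 (dist p' q' - (1 - l) * dist q' p')) \<le> (1 - l) * dist p p'"
    using conv_common[OF cat r3 r2, of "1 - l"] l by simp
  have e1: "dist p q' - (1 - l) * dist q' p = l * dist p q'" by (simp add: dist_commute algebra_simps)
  have e2: "dist p' q' - (1 - l) * dist q' p' = l * dist p' q'" by (simp add: dist_commute algebra_simps)
  have "dist (s1 (l * dist p q)) (s2 (l * dist p' q')) \<le>
        dist (s1 (l * dist p q)) (s3 (l * dist p q')) + dist (s3 (l * dist p q')) (s2 (l * dist p' q'))"
    by (rule dist_triangle)
  thus ?thesis using A B e1 e2 by simp
qed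

lemma ray_geodesic:
  assumes "geodesic_ray a" "T \<ge> 0"
  shows "geodesic a (a 0) (a T)"
proof -
  have d: "dist (a 0) (a T) = T" using assms unfolding geodesic_ray_def by auto
  show ?thesis unfolding geodesic_def d using assms unfolding geodesic_ray_def by auto
qed

lemma ray_dist: "geodesic_ray a \<Longrightarrow> s \<ge> 0 \<Longrightarrow> t \<ge> 0 \<Longrightarrow> dist (a s) (a t) = \<bar>s - t\<bar>"
  unfolding geodesic_ray_def by blast

lemma asym_rays_bound:
  fixes a b :: "real \<Rightarrow> 'a::metric_space"
  assumes cat: "CAT0_space TYPE('a)"
  and ra: "geodesic_ray a" and rb: "geodesic_ray b" and as: "asymptotic a b" and t: "t \<ge> 0"
  shows "dist (a t) (b t) \<le> dist (a 0) (b 0)"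
proof -
  obtain K where K: "\<And>s. s \<ge> 0 \<Longrightarrow> dist (a s) (b s) \<le> K" using as unfolding asymptotic_def by blast
  have K0: "K \<ge> 0" using K[of 0] zero_le_dist[of "a 0" "b 0"] by linarith
  show ?thesis
  proof (rule field_le_epsilon)
    fix e :: real assume e: "e > 0"
    define T where "T = t + 1 + t * K / e"
    have tK: "t * K \<ge> 0" using t K0 by simp
    have Tpos: "T > 0" unfolding T_def using t tK e by (simp add: add_pos_nonneg)
    have tT: "t \<le> T" unfolding T_def using tK e by simp
    define l where "l = t / T"
    have l: "0 \<le> l" "l \<le> 1" unfolding l_def using t Tpos tT by auto
    have da: "dist (a 0) (a T) = T" using ray_dist[OF ra, of 0 T] Tpos by simp
    have db: "dist (b 0) (b T) = T" using ray_dist[OF rb, of 0 T] Tpos by simp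
    have "dist (a (l * dist (a 0) (a T))) (b (l * dist (b 0) (b T))) \<le>
          (1 - l) * dist (a 0) (b 0) + l * dist (a T) (b T)"
      using conv_general[OF cat ray_geodesic[OF ra] ray_geodesic[OF rb] l] Tpos by simp
    moreover have "l * dist (a 0) (a T) = t" "l * dist (b 0) (b T) = t"
      unfolding l_def da db using Tpos by auto
    ultimately have 1: "dist (a t) (b t) \<le> (1 - l) * dist (a 0) (b 0) + l * dist (a T) (b T)" by simp
    have "(1 - l) * dist (a 0) (b 0) \<le> dist (a 0) (b 0)" using l mult_left_le_one_le[of "dist (a 0) (b 0)" "1 - l"] by simp
    moreover have "l * dist (a T) (b T) \<le> l * K" using K[of T] Tpos l by (simp add: mult_left_mono)
    moreover have "l * K \<le> e"
    proof -
      have "t * K \<le> e * T" unfolding T_def using e t K0 by (simp add: algebra_simps)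
      hence "t * K / T \<le> e" using Tpos by (simp add: divide_le_eq)
      thus ?thesis unfolding l_def by simp
    qed
    ultimately show "dist (a t) (b t) \<le> dist (a 0) (b 0) + e" using 1 by linarith
  qed
qed

lemma rays_same_start:
  fixes a b :: "real \<Rightarrow> 'a::metric_space"
  assumes cat: "CAT0_space TYPE('a)"
  and ra: "geodesic_ray a" and rb: "geodesic_ray b" and x: "a 0 = b 0"
  and r: "0 \<le> r" "r \<le> R" "R > 0"
  shows "dist (a r) (b r) \<le> r / R * dist (a R) (b R)"
proof -
  have da: "dist (a 0) (a R) = R" using ray_dist[OF ra, of 0 R] r by simp
  have db: "dist (b 0) (b R) = R" using ray_dist[OF rb, of 0 R] r by simp
  have l: "0 \<le> r / R" "r / R \<le> 1" using r by auto
  have "geodesic b (a 0) (b R)" using ray_geodesic[OF rb, of R] x r by simp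
  from conv_common[OF cat ray_geodesic[OF ra, of R] this l] r
  show ?thesis using da db x by simp
qed



lemma cauchy_from_bound:
  fixes f :: "nat \<Rightarrow> 'a::metric_space"
  assumes b: "\<And>m n. N0 \<le> n \<Longrightarrow> n \<le> m \<Longrightarrow> (dist (f m) (f n))^2 \<le> K / (real n - D)"
  and N0: "real N0 > D" and K: "K \<ge> 0"
  shows "Cauchy f"
  unfolding Cauchy_def
proof (intro allI impI)
  fix e :: real assume e: "e > 0"
  define M where "M = max N0 (nat \<lceil>D + K / e^2\<rceil> + 1)"
  have key: "dist (f m) (f n) < e" if "M \<le> n" "n \<le> m" for m n
  proof -
    have n0: "N0 \<le> n" using that unfolding M_def by auto
    have nD: "real n - D > 0" using N0 n0 by (smt (verit) of_nat_mono)
    have nD2: "real n - D > K / e^2"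
    proof -
      have "nat \<lceil>D + K / e^2\<rceil> + 1 \<le> n" using that unfolding M_def by auto
      hence "real (nat \<lceil>D + K / e^2\<rceil>) + 1 \<le> real n" by linarith
      moreover have "D + K / e^2 \<le> real (nat \<lceil>D + K / e^2\<rceil>)" by linarith
      ultimately show ?thesis by linarith
    qed
    have "K / (real n - D) < e^2"
    proof (cases "K = 0")
      case True thus ?thesis using e by simp
    next
      case False
      hence Kp: "K > 0" using K by simp
      have "K < e^2 * (real n - D)" using nD2 e by (simp add: divide_less_eq mult.commute)
      thus ?thesis using nD by (simp add: divide_less_eq)
    qed
    hence "(dist (f m) (f n))^2 < e^2" using b[OF n0 that(2)] by linarith
    thus ?thesis using e by (meson abs_le_square_iff abs_of_pos not_le order.strict_iff_not zero_le_dist power_less_imp_less_base)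
  qed
  show "\<exists>M. \<forall>m\<ge>M. \<forall>n\<ge>M. dist (f m) (f n) < e"
  proof (intro exI allI impI)
    fix m n assume "M \<le> m" "M \<le> n"
    show "dist (f m) (f n) < e"
    proof (cases "n \<le> m")
      case True thus ?thesis using key \<open>M \<le> n\<close> by blast
    next
      case False thus ?thesis using key[of m n] \<open>M \<le> m\<close> by (simp add: dist_commute)
    qed
  qed
qed

lemma thin_triangle:
  fixes p q q' :: "'a::metric_space"
  assumes cat: "CAT0_space TYPE('a)"
  and g1: "geodesic s1 p q" and g2: "geodesic s2 p q'"
  and pos1: "dist p q > 0" and pos2: "dist p q' > 0"
  and t: "0 \<le> t" "t \<le> dist p q" "t \<le> dist p q'"
  shows "(dist (s1 t) (s2 t))^2 \<le> 2 * t^2 * (dist q q' + dist p q' - dist p q) / dist p q'"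
proof -
  define L1 where "L1 = dist p q"
  define L2 where "L2 = dist p q'"
  define B where "B = dist q q'"
  have tri: "B \<le> L1 + L2" "L1 \<le> B + L2" "L2 \<le> B + L1"
    unfolding L1_def L2_def B_def
    using dist_triangle[of p q q'] dist_triangle[of p q' q] dist_triangle[of q q' p]
    by (auto simp: dist_commute)
  obtain z where z: "cmod z = L2" "cmod (of_real L1 - z) = B" "Re z = (L1^2 + L2^2 - B^2)/(2*L1)"
    using comparison_point[of L2 B L1] tri pos1 unfolding L1_def L2_def B_def by auto
  have d: "dist (s1 t) (s2 t) \<le> cmod (of_real t - of_real (t / L2) * z)"
    using cat0_common_start[OF cat g1 g2 pos1, of z t t] z t unfolding L1_def L2_def B_def by auto
  have L2p: "L2 > 0" using pos2 unfolding L2_def .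
  have L1p: "L1 > 0" using pos1 unfolding L1_def .
  have zz: "(Re z)^2 + (Im z)^2 = L2^2" using z(1) by (simp add: cmod_power2[symmetric])
  have "(cmod (of_real t - of_real (t / L2) * z))^2 = (t - t / L2 * Re z)^2 + (t / L2 * Im z)^2"
    by (simp add: cmod_power2)
  also have "\<dots> = t^2 - 2 * t^2 * Re z / L2 + t^2 / L2^2 * ((Re z)^2 + (Im z)^2)"
    using L2p by (simp add: power2_eq_square field_simps)
  also have "\<dots> = 2 * t^2 - 2 * t^2 * Re z / L2" using zz L2p by (simp add: field_simps)
  also have "\<dots> = t^2 * (2 * L1 * L2 - (L1^2 + L2^2 - B^2)) / (L1 * L2)"
  proof -
    have h: "L1^2 + L2^2 - B^2 = 2 * L1 * Re z" using z(3) L1p by (simp add: field_simps)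
    show ?thesis unfolding h using L1p L2p by (simp add: field_simps power2_eq_square)
  qed
  also have "\<dots> \<le> t^2 * (2 * L1 * (B + L2 - L1)) / (L1 * L2)"
  proof -
    have "\<bar>L1 - B\<bar> \<le> \<bar>L2\<bar>" using tri L2p by auto
    hence "(L1 - B)^2 \<le> L2^2" by (simp add: abs_le_square_iff)
    hence "2 * L1 * L2 - (L1^2 + L2^2 - B^2) \<le> 2 * L1 * (B + L2 - L1)"
      by (simp add: power2_eq_square algebra_simps)
    thus ?thesis using L1p L2p by (intro divide_right_mono mult_left_mono) auto
  qed
  also have "\<dots> = 2 * t^2 * (B + L2 - L1) / L2" using L1p L2p by (simp add: field_simps)
  finally have "(cmod (of_real t - of_real (t / L2) * z))^2 \<le> 2 * t^2 * (B + L2 - L1) / L2" .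
  moreover have "(dist (s1 t) (s2 t))^2 \<le> (cmod (of_real t - of_real (t / L2) * z))^2"
    using d by (simp add: power_mono)
  ultimately show ?thesis unfolding L1_def L2_def B_def by linarith
qed



lemma ray_exists:
  fixes c :: "real \<Rightarrow> 'a::metric_space" and x :: 'a
  assumes cat: "CAT0_space TYPE('a)" and comp: "complete (UNIV::'a set)"
  and rc: "geodesic_ray c"
  shows "\<exists>r. geodesic_ray r \<and> asymptotic c r \<and> r 0 = x"
proof -
  define D where "D = dist x (c 0)"
  have D0: "D \<ge> 0" unfolding D_def by simp
  have "\<forall>n::nat. \<exists>g. geodesic g x (c (real n))"
    using cat unfolding CAT0_space_def geodesic_space_def by blast
  then obtain sg where sg: "\<And>n. geodesic (sg n) x (c (real n))" by metis
  define A where "A n = dist x (c (real n))" for n :: nat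
  have cn: "dist (c 0) (c (real n)) = real n" for n :: nat using ray_dist[OF rc, of 0 "real n"] by simp
  have Alo: "real n - D \<le> A n" for n
    using dist_triangle[of "c 0" "c (real n)" x] cn[of n] unfolding A_def D_def by (simp add: dist_commute)
  have Ahi: "A n \<le> real n + D" for n
    using dist_triangle[of x "c (real n)" "c 0"] cn[of n] unfolding A_def D_def by (simp add: dist_commute)
  define N0 where "N0 t = nat \<lceil>t + D\<rceil> + 1" for t :: real
  have N0: "real n > t + D" if "N0 t \<le> n" for n t
  proof -
    have "real (nat \<lceil>t + D\<rceil>) + 1 \<le> real n" using that unfolding N0_def by linarith
    moreover have "t + D \<le> real (nat \<lceil>t + D\<rceil>)" by linarith
    ultimately show ?thesis by linarith
  qed
  have AN: "A n > t" if "N0 t \<le> n" for n t using N0[OF that] Alo[of n] by linarith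
  have conv: "\<exists>l. (\<lambda>n. sg n t) \<longlonglongrightarrow> l" if t: "t \<ge> 0" for t
  proof -
    have b: "(dist (sg m t) (sg n t))^2 \<le> 4 * t^2 * D / (real n - D)" if nm: "N0 t \<le> n" "n \<le> m" for m n
    proof -
      have m0: "N0 t \<le> m" using nm by simp
      have An: "A n > t" using AN[OF nm(1)] .
      have Am: "A m > t" using AN[OF m0] .
      have dmn: "dist (c (real m)) (c (real n)) = real m - real n"
        using ray_dist[OF rc, of "real m" "real n"] nm by simp
      have "(dist (sg m t) (sg n t))^2 \<le> 2 * t^2 * (dist (c (real m)) (c (real n)) + A n - A m) / A n"
      proof -
        have p1: "dist x (c (real m)) > 0" using Am t unfolding A_def by linarith
        have p2: "dist x (c (real n)) > 0" using An t unfolding A_def by linarith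
        show ?thesis
          using thin_triangle[OF cat sg[of m] sg[of n] p1 p2, of t] An Am t unfolding A_def by simp
      qed
      also have "\<dots> \<le> 2 * t^2 * (2 * D) / A n"
      proof -
        have "dist (c (real m)) (c (real n)) + A n - A m \<le> 2 * D"
          using dmn Ahi[of n] Alo[of m] by linarith
        thus ?thesis using An t by (intro divide_right_mono mult_left_mono) auto
      qed
      also have "\<dots> \<le> 2 * t^2 * (2 * D) / (real n - D)"
      proof -
        have "real n - D > 0" using N0[OF nm(1)] t by linarith
        thus ?thesis using Alo[of n] D0 by (intro divide_left_mono) auto
      qed
      finally show ?thesis by simp
    qed
    have "Cauchy (\<lambda>n. sg n t)"
      by (rule cauchy_from_bound[of "N0 t" _ "4 * t^2 * D" D]) (use b N0[of t "N0 t"] t D0 in auto)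
    thus ?thesis using comp unfolding complete_def by blast
  qed
  define r where "r t = lim (\<lambda>n. sg n t)" for t
  have rlim: "(\<lambda>n. sg n t) \<longlonglongrightarrow> r t" if "t \<ge> 0" for t
    using conv[OF that] unfolding r_def by (metis limI)
  have r0: "r 0 = x"
  proof -
    have "(\<lambda>n. sg n 0) = (\<lambda>n. x)" using geodesic_0[OF sg] by auto
    thus ?thesis unfolding r_def by simp
  qed
  have ray: "geodesic_ray r"
    unfolding geodesic_ray_def
  proof (intro allI impI)
    fix s t :: real assume s: "s \<ge> 0" and t: "t \<ge> 0"
    have L: "(\<lambda>n. dist (sg n s) (sg n t)) \<longlonglongrightarrow> dist (r s) (r t)"
      by (intro tendsto_dist rlim s t)
    have ev: "eventually (\<lambda>n. dist (sg n s) (sg n t) = \<bar>s - t\<bar>) sequentially"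
      unfolding eventually_sequentially
    proof (intro exI allI impI)
      fix n assume n: "N0 (max s t) \<le> n"
      have "A n > max s t" using AN[OF n] .
      thus "dist (sg n s) (sg n t) = \<bar>s - t\<bar>"
        using geodesic_d[OF sg[of n], of s t] s t unfolding A_def by simp
    qed
    have "(\<lambda>n. \<bar>s - t\<bar>) \<longlonglongrightarrow> dist (r s) (r t)"
      using tendsto_cong[OF ev] L by simp
    thus "dist (r s) (r t) = \<bar>s - t\<bar>" using LIMSEQ_unique tendsto_const by blast
  qed
  have asym: "asymptotic c r"
    unfolding asymptotic_def
  proof (intro exI allI impI)
    fix t :: real assume t: "t \<ge> 0"
    have L: "(\<lambda>n. dist (c t) (sg n t)) \<longlonglongrightarrow> dist (c t) (r t)"
      by (intro tendsto_dist rlim t tendsto_const)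
    have "\<forall>n\<ge>N0 t. dist (c t) (sg n t) \<le> 2 * D"
    proof (intro allI impI)
      fix n assume n: "N0 t \<le> n"
      have An: "A n > t" using AN[OF n] .
      have Ap: "A n > 0" using An t by linarith
      define l where "l = t / A n"
      have l: "0 \<le> l" "l \<le> 1" unfolding l_def using An t by auto
      have g2: "geodesic c (c 0) (c (real n))" using ray_geodesic[OF rc] by simp
      have "dist (sg n (l * dist x (c (real n)))) (c (l * dist (c 0) (c (real n))))
            \<le> (1 - l) * dist x (c 0) + l * dist (c (real n)) (c (real n))"
        using conv_general[OF cat sg[of n] g2 l] .
      moreover have "l * dist x (c (real n)) = t" unfolding l_def A_def[symmetric] using Ap by simp
      ultimately have d1: "dist (sg n t) (c (l * real n)) \<le> (1 - l) * D" unfolding D_def cn by simp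
      have "(1 - l) * D \<le> D" using l D0 mult_left_le_one_le[of D "1 - l"] by simp
      hence d1': "dist (sg n t) (c (l * real n)) \<le> D" using d1 by linarith
      have "dist (c (l * real n)) (c t) = \<bar>l * real n - t\<bar>" using ray_dist[OF rc] l t by simp
      also have "l * real n - t = t * (real n - A n) / A n" unfolding l_def using Ap by (simp add: field_simps)
      also have "\<bar>\<dots>\<bar> = t * \<bar>real n - A n\<bar> / A n" using t Ap by (simp add: abs_mult)
      also have "\<dots> \<le> t * D / A n"
      proof -
        have "\<bar>real n - A n\<bar> \<le> D" using Alo[of n] Ahi[of n] by linarith
        thus ?thesis using t Ap by (intro divide_right_mono mult_left_mono) auto
      qed
      also have "\<dots> \<le> D"
      proof -
        have "t * D \<le> A n * D" using An D0 by (intro mult_right_mono) auto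
        thus ?thesis using Ap by (simp add: divide_le_eq mult.commute)
      qed
      finally have d2: "dist (c (l * real n)) (c t) \<le> D" .
      have "dist (c t) (sg n t) \<le> dist (sg n t) (c (l * real n)) + dist (c (l * real n)) (c t)"
        using dist_triangle[of "c t" "sg n t" "c (l * real n)"] by (simp add: dist_commute)
      thus "dist (c t) (sg n t) \<le> 2 * D" using d1' d2 by linarith
    qed
    thus "dist (c t) (r t) \<le> 2 * D" using LIMSEQ_le_const2[OF L] by blast
  qed
  show ?thesis using ray asym r0 by blast
qed



lemma asym_sym: "asymptotic a b \<Longrightarrow> asymptotic b a"
  unfolding asymptotic_def by (simp add: dist_commute)

lemma asym_trans: "asymptotic a b \<Longrightarrow> asymptotic b c \<Longrightarrow> asymptotic a c"
  unfolding asymptotic_def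
proof -
  assume "\<exists>K. \<forall>t\<ge>0. dist (a t) (b t) \<le> K" "\<exists>K. \<forall>t\<ge>0. dist (b t) (c t) \<le> K"
  then obtain K1 K2 where "\<forall>t\<ge>0. dist (a t) (b t) \<le> K1" "\<forall>t\<ge>0. dist (b t) (c t) \<le> K2" by blast
  hence "\<forall>t\<ge>0. dist (a t) (c t) \<le> K1 + K2"
    using dist_triangle[of "a _" "c _" "b _"] by (smt (verit))
  thus "\<exists>K. \<forall>t\<ge>0. dist (a t) (c t) \<le> K" by blast
qed

lemma VB_iff: "\<xi> \<in> visual_boundary TYPE('a::metric_space) \<longleftrightarrow> (\<exists>c::real\<Rightarrow>'a. geodesic_ray c \<and> \<xi> = ray_class c)"
  unfolding visual_boundary_def by blast

lemma class_members:
  assumes "\<xi> \<in> visual_boundary TYPE('a::metric_space)" "c1 \<in> \<xi>" "c2 \<in> \<xi>"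
  shows "geodesic_ray c1 \<and> asymptotic c1 c2"
proof -
  obtain c :: "real \<Rightarrow> 'a" where c: "\<xi> = ray_class c" using assms(1) unfolding VB_iff by blast
  have "geodesic_ray c1" "asymptotic c c1" "asymptotic c c2" using assms(2,3) unfolding c ray_class_def by auto
  thus ?thesis using asym_trans[OF asym_sym] by blast
qed

lemma class_start:
  fixes x :: "'a::metric_space"
  assumes cat: "CAT0_space TYPE('a)" and comp: "complete (UNIV::'a set)"
  and "\<xi> \<in> visual_boundary TYPE('a)"
  shows "\<exists>c\<in>\<xi>. c 0 = x"
proof -
  obtain c where c: "geodesic_ray c" "\<xi> = ray_class c" using assms(3) unfolding VB_iff by blast
  obtain r where "geodesic_ray r \<and> asymptotic c r \<and> r 0 = x" using ray_exists[OF cat comp c(1)] by blast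
  thus ?thesis using c unfolding ray_class_def by blast
qed

lemma isometry_dist: "isometry g \<Longrightarrow> dist (g x) (g y) = dist x y"
  unfolding isometry_def by blast

lemma isometry_inj: assumes g: "isometry g" shows "inj g"
proof (rule injI)
  fix x y assume "g x = g y"
  hence "dist x y = 0" using isometry_dist[OF g, of x y] by simp
  thus "x = y" by simp
qed

lemma ray_comp: "isometry g \<Longrightarrow> geodesic_ray (g \<circ> c) \<longleftrightarrow> geodesic_ray c"
  unfolding geodesic_ray_def by (simp add: isometry_dist)

lemma asym_comp: "isometry g \<Longrightarrow> asymptotic (g \<circ> a) (g \<circ> b) \<longleftrightarrow> asymptotic a b"
  unfolding asymptotic_def by (simp add: isometry_dist)

lemma bm_class:
  assumes g: "isometry g"
  shows "boundary_map g (ray_class c) = ray_class (g \<circ> c)"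
proof
  show "boundary_map g (ray_class c) \<subseteq> ray_class (g \<circ> c)"
    unfolding boundary_map_def ray_class_def using ray_comp[OF g] asym_comp[OF g] by auto
next
  show "ray_class (g \<circ> c) \<subseteq> boundary_map g (ray_class c)"
  proof
    fix d assume d: "d \<in> ray_class (g \<circ> c)"
    define d' where "d' = inv g \<circ> d"
    have gd: "g \<circ> d' = d" unfolding d'_def using g unfolding isometry_def
      by (auto simp: fun_eq_iff surj_f_inv_f)
    have "d' \<in> ray_class c" using d ray_comp[OF g, of d'] asym_comp[OF g, of c d'] gd
      unfolding ray_class_def by auto
    thus "d \<in> boundary_map g (ray_class c)" unfolding boundary_map_def using gd by auto
  qed
qed

lemma bm_VB:
  assumes g: "isometry g" and xi: "\<xi> \<in> visual_boundary TYPE('a::metric_space)"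
  shows "boundary_map g \<xi> \<in> visual_boundary TYPE('a)"
proof -
  obtain c :: "real \<Rightarrow> 'a" where c: "geodesic_ray c" "\<xi> = ray_class c" using xi unfolding VB_iff by blast
  thus ?thesis unfolding VB_iff using bm_class[OF g] ray_comp[OF g] by auto
qed

lemma bm_inv:
  assumes g: "isometry g"
  shows "boundary_map (inv g) (boundary_map g \<xi>) = \<xi>"
proof -
  have "inv g \<circ> (g \<circ> c) = c" for c :: "real \<Rightarrow> 'a"
    using isometry_inj[OF g] by (simp add: fun_eq_iff)
  thus ?thesis unfolding boundary_map_def image_image by simp
qed

lemma self_nbhd:
  fixes x0 :: "'a::metric_space"
  assumes cat: "CAT0_space TYPE('a)" and comp: "complete (UNIV::'a set)"
  and hh: "\<xi> \<in> visual_boundary TYPE('a)" and e: "e > 0"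
  shows "\<xi> \<in> cone_nbhd x0 \<xi> R e"
proof -
  obtain c where "c \<in> \<xi>" "c 0 = x0" using class_start[OF cat comp hh, of x0] by blast
  hence "\<exists>c\<in>\<xi>. \<exists>c'\<in>\<xi>. c 0 = x0 \<and> c' 0 = x0 \<and> dist (c R) (c' R) < e" using e by force
  thus ?thesis using hh unfolding cone_nbhd_def by blast
qed

lemma topspace_cone:
  fixes x0 :: "'a::metric_space"
  assumes cat: "CAT0_space TYPE('a)" and comp: "complete (UNIV::'a set)"
  shows "topspace (cone_topology x0) = visual_boundary TYPE('a)"
proof -
  have mem: "\<xi> \<in> cone_nbhd x0 \<xi> 1 1" if hh: "\<xi> \<in> visual_boundary TYPE('a)" for \<xi>
  proof -
    obtain c where "c \<in> \<xi>" "c 0 = x0" using class_start[OF cat comp hh, of x0] by blast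
    hence "\<exists>c\<in>\<xi>. \<exists>c'\<in>\<xi>. c 0 = x0 \<and> c' 0 = x0 \<and> dist (c 1) (c' 1) < 1" by force
    thus ?thesis using hh unfolding cone_nbhd_def by blast
  qed
  let ?S = "{cone_nbhd x0 \<xi> r e | \<xi> r e. \<xi> \<in> visual_boundary TYPE('a) \<and> r > 0 \<and> e > 0}"
  have sub: "\<Union>?S \<subseteq> visual_boundary TYPE('a)" unfolding cone_nbhd_def by auto
  have sup: "visual_boundary TYPE('a) \<subseteq> \<Union>?S"
  proof
    fix \<xi> assume h: "\<xi> \<in> visual_boundary TYPE('a)"
    have "cone_nbhd x0 \<xi> 1 1 \<in> ?S" using h by force
    thus "\<xi> \<in> \<Union>?S" using mem[OF h] by blast
  qed
  show ?thesis unfolding cone_topology_def topology_generated_by_topspace using sub sup by blast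
qed

lemma bm_continuous:
  fixes x0 :: "'a::metric_space"
  assumes cat: "CAT0_space TYPE('a)" and comp: "complete (UNIV::'a set)"
  and g: "isometry g"
  shows "continuous_map (cone_topology x0) (cone_topology x0) (boundary_map g)"
proof -
  let ?VB = "visual_boundary TYPE('a)"
  let ?S = "{cone_nbhd x0 \<xi> r e | \<xi> r e. \<xi> \<in> ?VB \<and> r > 0 \<and> e > 0}"
  have ts: "topspace (cone_topology x0) = ?VB" using topspace_cone[OF cat comp] .
  have US: "\<Union>?S = ?VB" using ts unfolding cone_topology_def by simp
  have open_pre: "openin (cone_topology x0) (boundary_map g -` U \<inter> ?VB)" if U: "U \<in> ?S" for U
  proof -
    obtain \<xi> r e where U': "U = cone_nbhd x0 \<xi> r e" "\<xi> \<in> ?VB" "r > 0" "e > 0" using U by blast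
    show ?thesis
    proof (subst openin_subopen, intro ballI)
      fix \<eta> assume eta: "\<eta> \<in> boundary_map g -` U \<inter> ?VB"
      hence etaVB: "\<eta> \<in> ?VB" by simp
      from eta obtain c h where ch: "c \<in> \<xi>" "h \<in> boundary_map g \<eta>" "c 0 = x0" "h 0 = x0" "dist (c r) (h r) < e"
        unfolding U' cone_nbhd_def by blast
      define e' where "e' = e - dist (c r) (h r)"
      have e': "e' > 0" unfolding e'_def using ch by simp
      define D where "D = dist x0 (g x0)"
      have D0: "D \<ge> 0" unfolding D_def by simp
      define R where "R = r * (1 + (2 * D + 1) / e')"
      have Rr: "r \<le> R" unfolding R_def using U' e' D0 by simp
      have Rp: "R > 0" using Rr U' by simp
      have small: "r / R * (2 * D + 1) < e'"
      proof -
        have X: "e' + 2 * D + 1 > 0" using e' D0 by simp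
        have RR: "R = r * (e' + 2 * D + 1) / e'" unfolding R_def using e' by (simp add: field_simps)
        have "r / R = e' / (e' + 2 * D + 1)" unfolding RR using U' e' X by simp
        hence "r / R * (2 * D + 1) = e' * ((2 * D + 1) / (e' + 2 * D + 1))" by simp
        also have "\<dots> < e' * 1" using e' D0 by (intro mult_strict_left_mono) auto
        finally show ?thesis by simp
      qed
      define N where "N = cone_nbhd x0 \<eta> R 1"
      have Nopen: "openin (cone_topology x0) N"
        unfolding N_def cone_topology_def
      proof (intro topology_generated_by_Basis)
        show "cone_nbhd x0 \<eta> R 1 \<in> {cone_nbhd x0 \<xi> r e |\<xi> r e. \<xi> \<in> ?VB \<and> 0 < r \<and> 0 < e}"
          using etaVB Rp by (intro CollectI exI[of _ \<eta>] exI[of _ R] exI[of _ 1]) simp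
      qed
      have etaN: "\<eta> \<in> N"
        unfolding N_def by (rule self_nbhd[OF cat comp etaVB]) simp
      have NP: "N \<subseteq> boundary_map g -` U \<inter> ?VB"
      proof
        fix \<zeta> assume "\<zeta> \<in> N"
        then obtain a1 a' where z: "\<zeta> \<in> ?VB" "a1 \<in> \<eta>" "a' \<in> \<zeta>" "a1 0 = x0" "a' 0 = x0"
          "dist (a1 R) (a' R) < 1" unfolding N_def cone_nbhd_def by blast
        have gzVB: "boundary_map g \<zeta> \<in> ?VB" using bm_VB[OF g z(1)] .
        have geVB: "boundary_map g \<eta> \<in> ?VB" using bm_VB[OF g etaVB] .
        obtain k where k: "k \<in> boundary_map g \<zeta>" "k 0 = x0" using class_start[OF cat comp gzVB] by blast
        have ga1: "g \<circ> a1 \<in> boundary_map g \<eta>" using z unfolding boundary_map_def by auto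
        have ga': "g \<circ> a' \<in> boundary_map g \<zeta>" using z unfolding boundary_map_def by auto
        have hray: "geodesic_ray h" using class_members[OF geVB ch(2) ch(2)] by blast
        have kray: "geodesic_ray k" using class_members[OF gzVB k(1) k(1)] by blast
        have 1: "dist (h R) ((g \<circ> a1) R) \<le> D"
        proof -
          have "geodesic_ray (g \<circ> a1)" "asymptotic h (g \<circ> a1)"
            using class_members[OF geVB ga1 ch(2)] class_members[OF geVB ch(2) ga1] by auto
          from asym_rays_bound[OF cat hray this(1) this(2), of R] Rp
          show ?thesis using ch z unfolding D_def by simp
        qed
        have 2: "dist ((g \<circ> a') R) (k R) \<le> D"
        proof -
          have "geodesic_ray (g \<circ> a')" "asymptotic (g \<circ> a') k"
            using class_members[OF gzVB ga' k(1)] by auto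
          from asym_rays_bound[OF cat this(1) kray this(2), of R] Rp
          show ?thesis using k z unfolding D_def by (simp add: dist_commute)
        qed
        have 3: "dist ((g \<circ> a1) R) ((g \<circ> a') R) < 1" using z isometry_dist[OF g] by simp
        have "dist (h R) (k R) \<le> dist (h R) ((g \<circ> a1) R) + dist ((g \<circ> a1) R) ((g \<circ> a') R) + dist ((g \<circ> a') R) (k R)"
          by (meson dist_triangle add_mono order_trans order_refl)
        hence hk: "dist (h R) (k R) \<le> 2 * D + 1" using 1 2 3 by linarith
        have "dist (h r) (k r) \<le> r / R * dist (h R) (k R)"
          using rays_same_start[OF cat hray kray, of r R] ch k U' Rr Rp by simp
        also have "\<dots> \<le> r / R * (2 * D + 1)" using hk U' Rp by (intro mult_left_mono) auto
        finally have "dist (h r) (k r) < e'" using small by linarith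
        hence "dist (c r) (k r) < e" using dist_triangle[of "c r" "k r" "h r"] unfolding e'_def by linarith
        hence "boundary_map g \<zeta> \<in> U" unfolding U' cone_nbhd_def using gzVB ch k by blast
        thus "\<zeta> \<in> boundary_map g -` U \<inter> ?VB" using z by simp
      qed
      show "\<exists>N. openin (cone_topology x0) N \<and> \<eta> \<in> N \<and> N \<subseteq> boundary_map g -` U \<inter> ?VB"
        using Nopen etaN NP by blast
    qed
  qed
  show ?thesis unfolding cone_topology_def
  proof (rule continuous_on_generated_topo)
    fix U assume "U \<in> ?S"
    thus "openin (topology_generated_by ?S) (boundary_map g -` U \<inter> topspace (topology_generated_by ?S))"
      using open_pre ts unfolding cone_topology_def by simp
  next
    show "boundary_map g ` topspace (topology_generated_by ?S) \<subseteq> \<Union>?S"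
      using ts US bm_VB[OF g] unfolding cone_topology_def by auto
  qed
qed



definition ct :: "(nat \<Rightarrow> bool) \<Rightarrow> nat \<Rightarrow> real" where
  "ct a n = (if a n then 2 else 0) / 3 ^ Suc n"

lemma ct_nonneg: "0 \<le> ct a n" unfolding ct_def by simp

lemma ct_le: "ct a (n + k) \<le> 2 / 3 ^ (k + 1) * (1/3) ^ n"
proof -
  have "(3::real) ^ Suc (n + k) = 3 ^ (k + 1) * 3 ^ n" by (simp add: power_add)
  thus ?thesis unfolding ct_def by (simp add: power_one_over field_simps)
qed

lemma ct_summable_shift: "summable (\<lambda>n. ct a (n + k))"
proof (rule summable_comparison_test'[of "\<lambda>n. 2 / 3 ^ (k + 1) * (1/3) ^ n" 0])
  show "summable (\<lambda>n. 2 / 3 ^ (k + 1) * (1/3::real) ^ n)" by (intro summable_mult) simp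
  fix n :: nat
  show "norm (ct a (n + k)) \<le> 2 / 3 ^ (k + 1) * (1/3) ^ n"
    using ct_le[of a n k] ct_nonneg[of a "n + k"] by (metis abs_of_nonneg real_norm_def)
qed

lemma ct_summable: "summable (ct a)"
  using ct_summable_shift[of a 0] by simp

lemma ct_tail: "(\<Sum>n. ct a (n + k)) \<le> 1 / 3 ^ k"
proof -
  have "(\<Sum>n. ct a (n + k)) \<le> (\<Sum>n. 2 / 3 ^ (k + 1) * (1/3) ^ n)"
  proof (rule suminf_le)
    show "summable (\<lambda>n. 2 / 3 ^ (k + 1) * (1/3::real) ^ n)" by (intro summable_mult) simp
    show "summable (\<lambda>n. ct a (n + k))" by (rule ct_summable_shift)
    fix n show "ct a (n + k) \<le> 2 / 3 ^ (k + 1) * (1/3) ^ n" by (rule ct_le)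
  qed
  also have "\<dots> = 2 / 3 ^ (k + 1) * (\<Sum>n. (1/3::real) ^ n)"
    by (rule suminf_mult) simp
  also have "(\<Sum>n. (1/3::real) ^ n) = 3 / 2" by (subst suminf_geometric) auto
  finally show ?thesis by simp
qed

fun cm :: "(nat \<Rightarrow> bool) \<Rightarrow> nat \<Rightarrow> nat" where
  "cm a 0 = 0"
| "cm a (Suc k) = 3 * cm a k + (if a k then 1 else 0)"

lemma ct_prefix: "(\<Sum>i<k. ct a i) = 2 * real (cm a k) / 3 ^ k"
proof (induction k)
  case 0 thus ?case by simp
next
  case (Suc k)
  have "(\<Sum>i<Suc k. ct a i) = 2 * real (cm a k) / 3 ^ k + ct a k" using Suc by simp
  also have "\<dots> = 2 * real (cm a (Suc k)) / 3 ^ Suc k"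
    unfolding ct_def by (simp add: field_simps)
  finally show ?case .
qed

lemma cantor_bounds:
  assumes "x \<in> cantor_set"
  shows "\<exists>m::nat. 2 * real m \<le> 3 ^ k * x \<and> 3 ^ k * x \<le> 2 * real m + 1"
proof -
  obtain a where x: "x = (\<Sum>n. ct a n)" using assms unfolding cantor_set_def ct_def by blast
  have "x = (\<Sum>n. ct a (n + k)) + 2 * real (cm a k) / 3 ^ k"
    unfolding x using suminf_split_initial_segment[OF ct_summable, of a k] ct_prefix by simp
  moreover have "0 \<le> (\<Sum>n. ct a (n + k))" by (rule suminf_nonneg[OF ct_summable_shift]) (simp add: ct_nonneg)
  moreover note ct_tail[of a k]
  ultimately have "2 * real (cm a k) / 3 ^ k \<le> x" "x \<le> 2 * real (cm a k) / 3 ^ k + 1 / 3 ^ k" by auto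
  hence "2 * real (cm a k) \<le> 3 ^ k * x" "3 ^ k * x \<le> 2 * real (cm a k) + 1"
    by (auto simp: field_simps)
  thus ?thesis by blast
qed

lemma cantor_gap:
  assumes xy: "x < y"
  shows "\<exists>z. x < z \<and> z < y \<and> z \<notin> cantor_set"
proof -
  obtain k :: nat where k: "3 / (y - x) < 3 ^ k"
    using real_arch_pow[of 3 "3 / (y - x)"] by auto
  define P where "P = (3::real) ^ k"
  have P: "P > 0" unfolding P_def by simp
  have kP: "3 < P * (y - x)" using k xy unfolding P_def by (simp add: divide_less_eq mult.commute)
  define N where "N = \<lfloor>P * x\<rfloor> + 1"
  define o' where "o' = (if odd N then N else N + 1)"
  have oo: "odd o'" unfolding o'_def by auto
  have o1: "P * x < real_of_int o'" unfolding o'_def N_def by (auto, linarith+)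
  have o2: "real_of_int o' \<le> P * x + 2" unfolding o'_def N_def by (auto, linarith+)
  define z where "z = (real_of_int o' + 1/2) / P"
  have "x < z" unfolding z_def using o1 P by (simp add: field_simps)
  moreover have "z < y" unfolding z_def using o2 P kP by (simp add: field_simps)
  moreover have "z \<notin> cantor_set"
  proof
    assume "z \<in> cantor_set"
    then obtain m :: nat where m: "2 * real m \<le> P * z" "P * z \<le> 2 * real m + 1"
      using cantor_bounds[of z k] unfolding P_def by blast
    have Pz: "P * z = real_of_int o' + 1/2" unfolding z_def using P by simp
    have "2 * int m \<le> o'" using m Pz by linarith
    moreover have "o' \<le> 2 * int m" using m Pz by linarith
    ultimately have "o' = 2 * int m" by simp
    thus False using oo by simp
  qed
  ultimately show ?thesis by blast
qed

lemma cantor_const: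
  fixes S :: "real set"
  assumes S: "connected S" and f: "continuous_on S f" and fS: "f ` S \<subseteq> cantor_set"
  and s: "s \<in> S" "s' \<in> S"
  shows "f s = f s'"
proof (rule ccontr)
  assume ne: "f s \<noteq> f s'"
  have C: "connected (f ` S)" using connected_continuous_image[OF f S] .
  { fix u v assume uv: "u \<in> S" "v \<in> S" "f u < f v"
    obtain z where z: "f u < z" "z < f v" "z \<notin> cantor_set" using cantor_gap[OF uv(3)] by blast
    have "z \<in> f ` S" using connected_contains_Icc[OF C, of "f u" "f v"] uv z by auto
    hence False using fS z by auto }
  thus False using ne s by (metis linorder_neqE_linordered_idom)
qed

lemma cantor_three: "0 \<in> cantor_set" "2/3 \<in> cantor_set" "2/9 \<in> cantor_set"
proof -
  have e: "(\<Sum>n. (if a n then 2 else 0) / 3 ^ Suc n) \<in> cantor_set" for a :: "nat \<Rightarrow> bool"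
    unfolding cantor_set_def by blast
  have "(\<lambda>n. (if False then 2 else 0) / (3::real) ^ Suc n) = (\<lambda>n. 0)" by simp
  thus "0 \<in> cantor_set" using e[of "\<lambda>n. False"] by simp
  have "(\<lambda>n. (if n = 0 then 2 else 0) / (3::real) ^ Suc n) = (\<lambda>n. if n = 0 then 2/3 else 0)"
    by (auto simp: fun_eq_iff)
  moreover have "(\<lambda>n::nat. if n = 0 then 2/3 else (0::real)) sums (2/3)"
    using sums_single[of 0 "\<lambda>_. 2/3::real"] by simp
  ultimately show "2/3 \<in> cantor_set" using e[of "\<lambda>n. n = 0"] sums_unique by fastforce
  have "(\<lambda>n. (if n = 1 then 2 else 0) / (3::real) ^ Suc n) = (\<lambda>n. if n = 1 then 2/9 else 0)"
    by (auto simp: fun_eq_iff)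
  moreover have "(\<lambda>n::nat. if n = 1 then 2/9 else (0::real)) sums (2/9)"
    using sums_single[of 1 "\<lambda>_. 2/9::real"] by simp
  ultimately show "2/9 \<in> cantor_set" using e[of "\<lambda>n. n = 1"] sums_unique by fastforce
qed



lemma cantor_path_const:
  fixes S :: "real set"
  assumes C: "is_cantor_subspace T C" and phi: "continuous_map (top_of_set S) (subtopology T C) \<phi>"
  and S: "connected S" and s: "s \<in> S" "s' \<in> S"
  shows "\<phi> s = \<phi> s'"
proof -
  obtain h g where hg: "homeomorphic_maps (subtopology T C) (subtopology euclideanreal cantor_set) h g"
    using C unfolding is_cantor_subspace_def homeomorphic_space_def by blast
  have h: "continuous_map (subtopology T C) (subtopology euclideanreal cantor_set) h"
    using hg unfolding homeomorphic_maps_def by blast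
  have gh: "\<And>x. x \<in> topspace (subtopology T C) \<Longrightarrow> g (h x) = x"
    using hg unfolding homeomorphic_maps_def by blast
  have hp: "continuous_map (top_of_set S) (subtopology euclideanreal cantor_set) (h \<circ> \<phi>)"
    using continuous_map_compose[OF phi h] .
  hence c1: "continuous_on S (h \<circ> \<phi>)" and c2: "(h \<circ> \<phi>) ` S \<subseteq> cantor_set"
    unfolding continuous_map_in_subtopology by auto
  have "(h \<circ> \<phi>) s = (h \<circ> \<phi>) s'" using cantor_const[OF S c1 c2 s] .
  moreover have "\<phi> s \<in> topspace (subtopology T C)" "\<phi> s' \<in> topspace (subtopology T C)"
    using phi s unfolding continuous_map_def by auto
  ultimately show ?thesis using gh by (metis comp_apply)
qed

lemma cantor_three_pts:
  assumes C: "is_cantor_subspace T C"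
  shows "\<exists>x y z. x \<in> C \<and> y \<in> C \<and> z \<in> C \<and> x \<noteq> y \<and> x \<noteq> z \<and> y \<noteq> z"
proof -
  obtain h g where hg: "homeomorphic_maps (subtopology T C) (subtopology euclideanreal cantor_set) h g"
    using C unfolding is_cantor_subspace_def homeomorphic_space_def by blast
  have g: "continuous_map (subtopology euclideanreal cantor_set) (subtopology T C) g"
    using hg unfolding homeomorphic_maps_def by blast
  have hg': "\<And>y. y \<in> cantor_set \<Longrightarrow> h (g y) = y"
    using hg unfolding homeomorphic_maps_def by auto
  have gC: "\<And>y. y \<in> cantor_set \<Longrightarrow> g y \<in> C"
    using g unfolding continuous_map_def by auto
  have "g 0 \<noteq> g (2/3)" using hg'[of 0] hg'[of "2/3"] cantor_three by force
  moreover have "g 0 \<noteq> g (2/9)" using hg'[of 0] hg'[of "2/9"] cantor_three by force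
  moreover have "g (2/3) \<noteq> g (2/9)" using hg'[of "2/9"] hg'[of "2/3"] cantor_three by force
  ultimately show ?thesis using gC cantor_three by blast
qed

locale jsetup =
  fixes T :: "'b topology" and C1 C2 :: "'b set" and q :: "'b \<times> 'b \<times> real \<Rightarrow> 'b"
  assumes cant1: "is_cantor_subspace T C1" and cant2: "is_cantor_subspace T C2"
  and quo: "quotient_map (prod_topology (subtopology T C1)
               (prod_topology (subtopology T C2) (top_of_set {0..1::real}))) T q"
  and ends: "\<forall>a\<in>C1. \<forall>b\<in>C2. q (a, b, 0) = a \<and> q (a, b, 1) = b"
  and ident: "\<forall>a\<in>C1. \<forall>b\<in>C2. \<forall>t\<in>{0..1}. \<forall>a'\<in>C1. \<forall>b'\<in>C2. \<forall>t'\<in>{0..1}.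
              q (a, b, t) = q (a', b', t') \<longleftrightarrow>
              (t = t' \<and> ((0 < t \<and> t < 1 \<and> a = a' \<and> b = b') \<or> (t = 0 \<and> a = a')
                          \<or> (t = 1 \<and> b = b')))"
begin

abbreviation "Y \<equiv> prod_topology (subtopology T C1) (prod_topology (subtopology T C2) (top_of_set {0..1::real}))"

lemma C1sub: "C1 \<subseteq> topspace T" using cant1 unfolding is_cantor_subspace_def by blast
lemma C2sub: "C2 \<subseteq> topspace T" using cant2 unfolding is_cantor_subspace_def by blast

lemma tY: "topspace Y = C1 \<times> C2 \<times> {0..1}"
  using C1sub C2sub by auto

lemma surjT: "q ` (C1 \<times> C2 \<times> {0..1}) = topspace T"
  using quo tY unfolding quotient_map_def by simp

lemma qT: "a \<in> C1 \<Longrightarrow> b \<in> C2 \<Longrightarrow> t \<in> {0..1} \<Longrightarrow> q (a, b, t) \<in> topspace T"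
  using surjT by blast

lemma rep: "z \<in> topspace T \<Longrightarrow> \<exists>a\<in>C1. \<exists>b\<in>C2. \<exists>t\<in>{0..1}. z = q (a, b, t)"
  using surjT by force

lemma ne1: "\<exists>a. a \<in> C1" using cantor_three_pts[OF cant1] by blast
lemma ne2: "\<exists>b. b \<in> C2" using cantor_three_pts[OF cant2] by blast

lemma disj: "C1 \<inter> C2 = {}"
proof (rule ccontr)
  assume "C1 \<inter> C2 \<noteq> {}"
  then obtain x where x: "x \<in> C1" "x \<in> C2" by blast
  have "q (x, x, 0) = q (x, x, 1)" using ends x by simp
  thus False using ident x by force
qed

definition rp :: "'b \<Rightarrow> 'b \<times> 'b \<times> real" where
  "rp z = (SOME y. y \<in> C1 \<times> C2 \<times> {0..1} \<and> q y = z)"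
definition pi :: "'b \<Rightarrow> real" where "pi z = snd (snd (rp z))"
definition alpha :: "'b \<Rightarrow> 'b" where "alpha z = fst (rp z)"
definition beta :: "'b \<Rightarrow> 'b" where "beta z = fst (snd (rp z))"

lemma rp_q:
  assumes "a \<in> C1" "b \<in> C2" "t \<in> {0..1}"
  shows "rp (q (a, b, t)) \<in> C1 \<times> C2 \<times> {0..1} \<and> q (rp (q (a, b, t))) = q (a, b, t)"
  unfolding rp_def by (rule someI[of _ "(a, b, t)"]) (use assms in auto)

lemma pi_q: assumes "a \<in> C1" "b \<in> C2" "t \<in> {0..1}" shows "pi (q (a, b, t)) = t"
proof -
  obtain a' b' t' where r: "rp (q (a, b, t)) = (a', b', t')" by (metis prod_cases3)
  have "a' \<in> C1" "b' \<in> C2" "t' \<in> {0..1}" "q (a', b', t') = q (a, b, t)" using rp_q[OF assms] r by auto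
  hence "t' = t" using ident assms by blast
  thus ?thesis unfolding pi_def using r by simp
qed

lemma alpha_q: assumes "a \<in> C1" "b \<in> C2" "t \<in> {0..1}" "t < 1" shows "alpha (q (a, b, t)) = a"
proof -
  obtain a' b' t' where r: "rp (q (a, b, t)) = (a', b', t')" by (metis prod_cases3)
  have "a' \<in> C1" "b' \<in> C2" "t' \<in> {0..1}" "q (a', b', t') = q (a, b, t)" using rp_q[OF assms(1-3)] r by auto
  hence "a' = a" using ident assms by (smt (verit, best))
  thus ?thesis unfolding alpha_def using r by simp
qed

lemma beta_q: assumes "a \<in> C1" "b \<in> C2" "t \<in> {0..1}" "t > 0" shows "beta (q (a, b, t)) = b"
proof -
  obtain a' b' t' where r: "rp (q (a, b, t)) = (a', b', t')" by (metis prod_cases3)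
  have "a' \<in> C1" "b' \<in> C2" "t' \<in> {0..1}" "q (a', b', t') = q (a, b, t)" using rp_q[OF assms(1-3)] r by auto
  hence "b' = b" using ident assms by (smt (verit, best))
  thus ?thesis unfolding beta_def using r by simp
qed

lemma pi_cont: "continuous_map T euclideanreal pi"
proof (rule continuous_compose_quotient_map[OF quo])
  have "continuous_map Y (top_of_set {0..1}) (snd \<circ> snd)"
    by (rule continuous_map_compose[OF continuous_map_snd continuous_map_snd])
  hence c: "continuous_map Y euclideanreal (snd \<circ> snd)"
    unfolding continuous_map_in_subtopology by blast
  show "continuous_map Y euclideanreal (pi \<circ> q)"
    by (rule continuous_map_eq[OF c]) (auto simp: tY pi_q)
qed

lemma pi_range: "z \<in> topspace T \<Longrightarrow> pi z \<in> {0..1}"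
  using rep pi_q by force

lemma C1_pi: "C1 = {z \<in> topspace T. pi z = 0}"
proof
  show "C1 \<subseteq> {z \<in> topspace T. pi z = 0}"
  proof
    fix a assume a: "a \<in> C1"
    obtain b where b: "b \<in> C2" using ne2 by blast
    have "q (a, b, 0) = a" using ends a b by simp
    thus "a \<in> {z \<in> topspace T. pi z = 0}" using pi_q[OF a b, of 0] C1sub a by auto
  qed
  show "{z \<in> topspace T. pi z = 0} \<subseteq> C1"
  proof clarify
    fix z assume z: "z \<in> topspace T" "pi z = 0"
    then obtain a b t where abt: "a \<in> C1" "b \<in> C2" "t \<in> {0..1}" "z = q (a, b, t)" using rep by blast
    hence "t = 0" using pi_q z by simp
    thus "z \<in> C1" using abt ends by simp
  qed
qed

lemma C2_pi: "C2 = {z \<in> topspace T. pi z = 1}"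
proof
  show "C2 \<subseteq> {z \<in> topspace T. pi z = 1}"
  proof
    fix b assume b: "b \<in> C2"
    obtain a where a: "a \<in> C1" using ne1 by blast
    have "q (a, b, 1) = b" using ends a b by simp
    thus "b \<in> {z \<in> topspace T. pi z = 1}" using pi_q[OF a b, of 1] C2sub b by auto
  qed
  show "{z \<in> topspace T. pi z = 1} \<subseteq> C2"
  proof clarify
    fix z assume z: "z \<in> topspace T" "pi z = 1"
    then obtain a b t where abt: "a \<in> C1" "b \<in> C2" "t \<in> {0..1}" "z = q (a, b, t)" using rep by blast
    hence "t = 1" using pi_q z by simp
    thus "z \<in> C2" using abt ends by simp
  qed
qed

definition "V1 = {z \<in> topspace T. pi z < 1}"
definition "V2 = {z \<in> topspace T. pi z > 0}"

lemma V1_open: "openin T V1"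
  using openin_continuous_map_preimage[OF pi_cont, of "{..<1}"] unfolding V1_def by simp
lemma V2_open: "openin T V2"
  using openin_continuous_map_preimage[OF pi_cont, of "{0<..}"] unfolding V2_def by simp

lemma alpha_cont: "continuous_map (subtopology T V1) (subtopology T C1) alpha"
proof -
  define U where "U = {x \<in> topspace Y. q x \<in> V1}"
  have qr: "quotient_map (subtopology Y U) (subtopology T V1) q"
    using quotient_map_restriction[OF quo U_def[symmetric]] V1_open by blast
  show ?thesis
  proof (rule continuous_compose_quotient_map[OF qr])
    have c: "continuous_map (subtopology Y U) (subtopology T C1) fst"
      by (rule continuous_map_from_subtopology[OF continuous_map_fst])
    show "continuous_map (subtopology Y U) (subtopology T C1) (alpha \<circ> q)"
    proof (rule continuous_map_eq[OF c])
      fix x assume "x \<in> topspace (subtopology Y U)"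
      then obtain a b t where x: "x = (a, b, t)" "a \<in> C1" "b \<in> C2" "t \<in> {0..1}" "q (a, b, t) \<in> V1"
        unfolding U_def by (auto simp: tY)
      have "t < 1" using x pi_q[OF x(2-4)] unfolding V1_def by simp
      thus "fst x = (alpha \<circ> q) x" using alpha_q[OF x(2-4)] x by simp
    qed
  qed
qed

lemma beta_cont: "continuous_map (subtopology T V2) (subtopology T C2) beta"
proof -
  define U where "U = {x \<in> topspace Y. q x \<in> V2}"
  have qr: "quotient_map (subtopology Y U) (subtopology T V2) q"
    using quotient_map_restriction[OF quo U_def[symmetric]] V2_open by blast
  show ?thesis
  proof (rule continuous_compose_quotient_map[OF qr])
    have c: "continuous_map (subtopology Y U) (subtopology T C2) (fst \<circ> snd)"
      by (rule continuous_map_from_subtopology[OF continuous_map_compose[OF continuous_map_snd continuous_map_fst]])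
    show "continuous_map (subtopology Y U) (subtopology T C2) (beta \<circ> q)"
    proof (rule continuous_map_eq[OF c])
      fix x assume "x \<in> topspace (subtopology Y U)"
      then obtain a b t where x: "x = (a, b, t)" "a \<in> C1" "b \<in> C2" "t \<in> {0..1}" "q (a, b, t) \<in> V2"
        unfolding U_def by (auto simp: tY)
      have "t > 0" using x pi_q[OF x(2-4)] unfolding V2_def by simp
      thus "(fst \<circ> snd) x = (beta \<circ> q) x" using beta_q[OF x(2-4)] x by simp
    qed
  qed
qed

end


definition branch :: "'b topology \<Rightarrow> 'b \<Rightarrow> bool" where
  "branch T p \<longleftrightarrow> (\<exists>g1 g2 g3. (\<forall>g\<in>{g1, g2, g3}. pathin T g \<and> inj_on g {0..1} \<and> g 0 = p) \<and>
      g1 ` {0..1} \<inter> g2 ` {0..1} = {p} \<and> g1 ` {0..1} \<inter> g3 ` {0..1} = {p} \<and> g2 ` {0..1} \<inter> g3 ` {0..1} = {p})"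

lemma pathin_img: "pathin T g \<Longrightarrow> g ` {0..1} \<subseteq> topspace T"
  unfolding pathin_def continuous_map_def by auto

lemma branch_hom:
  assumes f: "continuous_map T T f" and inj: "inj_on f (topspace T)" and b: "branch T p"
  shows "branch T (f p)"
proof -
  obtain g1 g2 g3 where g: "\<forall>g\<in>{g1, g2, g3}. pathin T g \<and> inj_on g {0..1} \<and> g 0 = p"
    and i: "g1 ` {0..1} \<inter> g2 ` {0..1} = {p}" "g1 ` {0..1} \<inter> g3 ` {0..1} = {p}" "g2 ` {0..1} \<inter> g3 ` {0..1} = {p}"
    using b unfolding branch_def by blast
  have P: "pathin T (f \<circ> g) \<and> inj_on (f \<circ> g) {0..1} \<and> (f \<circ> g) 0 = f p" if "g \<in> {g1, g2, g3}" for g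
  proof -
    have pg: "pathin T g" "inj_on g {0..1}" "g 0 = p" using g that by auto
    have "inj_on f (g ` {0..1})" using inj_on_subset[OF inj pathin_img[OF pg(1)]] .
    thus ?thesis using pathin_compose[OF pg(1) f] pg comp_inj_on by auto
  qed
  have I: "(f \<circ> ga) ` {0..1} \<inter> (f \<circ> gb) ` {0..1} = {f p}"
    if "ga \<in> {g1, g2, g3}" "gb \<in> {g1, g2, g3}" "ga ` {0..1} \<inter> gb ` {0..1} = {p}" for ga gb
  proof -
    have "ga ` {0..1} \<subseteq> topspace T" "gb ` {0..1} \<subseteq> topspace T"
      using g that pathin_img by blast+
    hence "f ` (ga ` {0..1} \<inter> gb ` {0..1}) = f ` ga ` {0..1} \<inter> f ` gb ` {0..1}"
      using inj_on_image_Int[OF inj] by blast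
    thus ?thesis using that(3) by (simp add: image_comp)
  qed
  show ?thesis unfolding branch_def
    apply (rule exI[of _ "f \<circ> g1"], rule exI[of _ "f \<circ> g2"], rule exI[of _ "f \<circ> g3"])
    using P I i by auto
qed

context jsetup begin

lemma qpath: assumes a: "a \<in> C1" and b: "b \<in> C2"
  and r: "continuous_map (top_of_set {0..1}) (top_of_set {0..1}) r"
  shows "pathin T (\<lambda>s. q (a, b, r s))"
proof -
  have a': "a \<in> topspace (subtopology T C1)" using a C1sub by auto
  have b': "b \<in> topspace (subtopology T C2)" using b C2sub by auto
  have "continuous_map (top_of_set {0..1}) Y (\<lambda>s. (a, b, r s))"
    by (intro continuous_map_pairedI) (use a' b' r in auto)
  hence "continuous_map (top_of_set {0..1}) T (q \<circ> (\<lambda>s. (a, b, r s)))"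
    using continuous_map_compose quotient_imp_continuous_map[OF quo] by blast
  thus ?thesis unfolding pathin_def by (simp add: o_def)
qed

lemma id01: "continuous_map (top_of_set {0..1}) (top_of_set {0..1::real}) (\<lambda>s. s)" by simp

lemma rev01: "continuous_map (top_of_set {0..1}) (top_of_set {0..1::real}) (\<lambda>s. 1 - s)"
proof (rule continuous_map_into_subtopology)
  show "continuous_map (top_of_set {0..1}) euclideanreal (\<lambda>s. 1 - s)"
    by (simp add: continuous_on_op_minus continuous_intros)
  show "(\<lambda>s. 1 - s) \<in> topspace (top_of_set {0..1}) \<rightarrow> {0..1::real}" by auto
qed

lemma branch_C1: assumes p: "p \<in> C1" shows "branch T p"
proof -
  obtain b1 b2 b3 where b: "b1 \<in> C2" "b2 \<in> C2" "b3 \<in> C2" "b1 \<noteq> b2" "b1 \<noteq> b3" "b2 \<noteq> b3"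
    using cantor_three_pts[OF cant2] by blast
  define g where "g b = (\<lambda>s. q (p, b, s))" for b
  have P: "pathin T (g b) \<and> inj_on (g b) {0..1} \<and> g b 0 = p" if "b \<in> C2" for b
  proof -
    have "pathin T (g b)" unfolding g_def using qpath[OF p that id01] .
    moreover have "inj_on (g b) {0..1}" unfolding g_def inj_on_def using ident p that by auto
    moreover have "g b 0 = p" unfolding g_def using ends p that by simp
    ultimately show ?thesis by blast
  qed
  have I: "g b ` {0..1} \<inter> g b' ` {0..1} = {p}" if "b \<in> C2" "b' \<in> C2" "b \<noteq> b'" for b b'
  proof
    show "{p} \<subseteq> g b ` {0..1} \<inter> g b' ` {0..1}" using P that by force
    show "g b ` {0..1} \<inter> g b' ` {0..1} \<subseteq> {p}"
    proof clarify
      fix s s' assume ss: "s \<in> {0..1}" "s' \<in> {0..1}" "g b s = g b' s'"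
      hence "s = s' \<and> s = 0" using ident p that unfolding g_def by (smt (verit, best))
      thus "g b s = p" using P[OF that(1)] by auto
    qed
  qed
  show ?thesis unfolding branch_def
    by (rule exI[of _ "g b1"], rule exI[of _ "g b2"], rule exI[of _ "g b3"]) (use P I b in auto)
qed

lemma branch_C2: assumes p: "p \<in> C2" shows "branch T p"
proof -
  obtain b1 b2 b3 where b: "b1 \<in> C1" "b2 \<in> C1" "b3 \<in> C1" "b1 \<noteq> b2" "b1 \<noteq> b3" "b2 \<noteq> b3"
    using cantor_three_pts[OF cant1] by blast
  define g where "g b = (\<lambda>s. q (b, p, 1 - s))" for b
  have P: "pathin T (g b) \<and> inj_on (g b) {0..1} \<and> g b 0 = p" if "b \<in> C1" for b
  proof -
    have "pathin T (g b)" unfolding g_def using qpath[OF that p rev01] .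
    moreover have "inj_on (g b) {0..1}" unfolding g_def inj_on_def using ident p that by auto
    moreover have "g b 0 = p" unfolding g_def using ends p that by simp
    ultimately show ?thesis by blast
  qed
  have I: "g b ` {0..1} \<inter> g b' ` {0..1} = {p}" if "b \<in> C1" "b' \<in> C1" "b \<noteq> b'" for b b'
  proof
    show "{p} \<subseteq> g b ` {0..1} \<inter> g b' ` {0..1}" using P that by force
    show "g b ` {0..1} \<inter> g b' ` {0..1} \<subseteq> {p}"
    proof clarify
      fix s s' assume ss: "s \<in> {0..1}" "s' \<in> {0..1}" "g b s = g b' s'"
      have "1 - s \<in> {0..1}" "1 - s' \<in> {0..1}" using ss by auto
      hence "s = s' \<and> s = 0" using ident p that ss unfolding g_def by (smt (verit, best))
      thus "g b s = p" using P[OF that(1)] by auto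
    qed
  qed
  show ?thesis unfolding branch_def
    by (rule exI[of _ "g b1"], rule exI[of _ "g b2"], rule exI[of _ "g b3"]) (use P I b in auto)
qed

end


context jsetup begin

lemma local_dir:
  assumes g: "pathin T g" "inj_on g {0..1}" "g 0 = p"
  and a0: "a0 \<in> C1" and b0: "b0 \<in> C2" and t0: "0 < t0" "t0 < 1" and p: "p = q (a0, b0, t0)"
  shows "\<exists>\<delta>>0. t0 - \<delta> \<ge> 0 \<and> t0 + \<delta> \<le> 1 \<and>
           (\<exists>d\<in>{-1,1::real}. \<forall>v\<in>{0..\<delta>}. \<exists>s\<in>{0..1}. g s = q (a0, b0, t0 + d * v))"
proof -
  have t01: "t0 \<in> {0..1}" using t0 by simp
  define E where "E = {z \<in> topspace T. pi z \<in> {0<..<1}}"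
  have Eo: "openin T E" unfolding E_def by (rule openin_continuous_map_preimage[OF pi_cont]) simp
  have gc: "continuous_map (top_of_set {0..1}) T g" using g(1) unfolding pathin_def .
  have W: "openin (top_of_set {0..1}) {s \<in> {0..1::real}. g s \<in> E}"
    using openin_continuous_map_preimage[OF gc Eo] by simp
  have piP: "pi p = t0" unfolding p using pi_q[OF a0 b0 t01] .
  have pE: "p \<in> E" unfolding E_def using piP t0 qT[OF a0 b0 t01] p by simp
  have W0: "0 \<in> {s \<in> {0..1::real}. g s \<in> E}" using pE g(3) by simp
  have "\<exists>e>0. \<forall>x'\<in>{0..1}. dist x' 0 < e \<longrightarrow> x' \<in> {s \<in> {0..1::real}. g s \<in> E}"
    using W[unfolded openin_euclidean_subtopology_iff] W0 by blast
  then obtain e where e: "e > 0" "\<And>x'. x' \<in> {0..1} \<Longrightarrow> dist x' 0 < e \<Longrightarrow> x' \<in> {s \<in> {0..1::real}. g s \<in> E}"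
    by blast
  define \<epsilon> where "\<epsilon> = min (e/2) 1"
  have eps: "\<epsilon> > 0" "\<epsilon> \<le> 1" unfolding \<epsilon>_def using e by auto
  have hE: "g s \<in> E" if "s \<in> {0..\<epsilon>}" for s
  proof -
    have "s \<in> {0..1}" "dist s 0 < e" using that eps e unfolding \<epsilon>_def by (auto simp: dist_real_def)
    thus ?thesis using e(2) by blast
  qed
  have ge: "continuous_map (top_of_set {0..\<epsilon>}) T g"
  proof -
    have "continuous_map (subtopology (top_of_set {0..1}) {0..\<epsilon>}) T g"
      by (rule continuous_map_from_subtopology[OF gc])
    moreover have "{0..1} \<inter> {0..\<epsilon>} = {0..\<epsilon>}" using eps by auto
    ultimately show ?thesis by (metis subtopology_subtopology)
  qed
  have EV1: "E \<subseteq> V1" "E \<subseteq> V2" unfolding E_def V1_def V2_def by auto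
  have ga: "continuous_map (top_of_set {0..\<epsilon>}) (subtopology T C1) (alpha \<circ> g)"
  proof (rule continuous_map_compose[OF _ alpha_cont])
    show "continuous_map (top_of_set {0..\<epsilon>}) (subtopology T V1) g"
      by (rule continuous_map_into_subtopology[OF ge]) (use hE EV1 in auto)
  qed
  have gb: "continuous_map (top_of_set {0..\<epsilon>}) (subtopology T C2) (beta \<circ> g)"
  proof (rule continuous_map_compose[OF _ beta_cont])
    show "continuous_map (top_of_set {0..\<epsilon>}) (subtopology T V2) g"
      by (rule continuous_map_into_subtopology[OF ge]) (use hE EV1 in auto)
  qed
  have z0: "(0::real) \<in> {0..\<epsilon>}" using eps by simp
  have al: "alpha (g s) = a0" if "s \<in> {0..\<epsilon>}" for s
    using cantor_path_const[OF cant1 ga connected_Icc that z0] g(3) alpha_q[OF a0 b0 t01 t0(2)] p by simp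
  have be: "beta (g s) = b0" if "s \<in> {0..\<epsilon>}" for s
    using cantor_path_const[OF cant2 gb connected_Icc that z0] g(3) beta_q[OF a0 b0 t01 t0(1)] p by simp
  have form: "g s = q (a0, b0, pi (g s)) \<and> pi (g s) \<in> {0<..<1}" if s: "s \<in> {0..\<epsilon>}" for s
  proof -
    have gs: "g s \<in> topspace T" "pi (g s) \<in> {0<..<1}" using hE[OF s] unfolding E_def by auto
    obtain a b t where abt: "a \<in> C1" "b \<in> C2" "t \<in> {0..1}" "g s = q (a, b, t)" using rep[OF gs(1)] by blast
    have pt: "pi (g s) = t" using abt pi_q by simp
    have "a = a0" using al[OF s] alpha_q[OF abt(1-3)] abt gs pt by simp
    moreover have "b = b0" using be[OF s] beta_q[OF abt(1-3)] abt gs pt by simp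
    ultimately show ?thesis using abt pt gs by simp
  qed
  define tau where "tau = pi \<circ> g"
  have tc: "continuous_on {0..\<epsilon>} tau"
    using continuous_map_compose[OF ge pi_cont] unfolding tau_def by simp
  have tau0: "tau 0 = t0" unfolding tau_def using g(3) piP by simp
  have epsI: "\<epsilon> \<in> {0..\<epsilon>}" using eps by simp
  have te: "tau \<epsilon> \<in> {0<..<1}" using form[OF epsI] unfolding tau_def by simp
  have tne: "tau \<epsilon> \<noteq> t0"
  proof
    assume "tau \<epsilon> = t0"
    hence "g \<epsilon> = g 0" using form[OF epsI] g(3) p unfolding tau_def by simp
    hence "\<epsilon> = 0" using g(2) eps unfolding inj_on_def by auto
    thus False using eps by simp
  qed
  have hit: "\<exists>s\<in>{0..1}. g s = q (a0, b0, y)" if "s0 \<in> {0..\<epsilon>}" "tau s0 = y" for s0 y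
  proof -
    have "g s0 = q (a0, b0, y)" using form[OF that(1)] that(2) unfolding tau_def by simp
    moreover have "s0 \<in> {0..1}" using that(1) eps by auto
    ultimately show ?thesis by blast
  qed
  show ?thesis
  proof (cases "tau \<epsilon> > t0")
    case True
    define \<delta> where "\<delta> = min (tau \<epsilon> - t0) t0"
    have "\<forall>v\<in>{0..\<delta>}. \<exists>s\<in>{0..1}. g s = q (a0, b0, t0 + 1 * v)"
    proof
      fix v assume v: "v \<in> {0..\<delta>}"
      have i1: "tau 0 \<le> t0 + v" "t0 + v \<le> tau \<epsilon>" using v tau0 unfolding \<delta>_def by auto
      have "\<exists>x\<ge>0. x \<le> \<epsilon> \<and> tau x = t0 + v" by (rule IVT'[OF i1 _ tc]) (use eps in simp)
      then obtain s0 where "0 \<le> s0" "s0 \<le> \<epsilon>" "tau s0 = t0 + v" by blast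
      thus "\<exists>s\<in>{0..1}. g s = q (a0, b0, t0 + 1 * v)" using hit by auto
    qed
    moreover have "\<delta> > 0" "t0 - \<delta> \<ge> 0" "t0 + \<delta> \<le> 1" using True t0 te unfolding \<delta>_def by auto
    ultimately show ?thesis by blast
  next
    case False
    hence lt: "tau \<epsilon> < t0" using tne by simp
    define \<delta> where "\<delta> = min (t0 - tau \<epsilon>) (1 - t0)"
    have "\<forall>v\<in>{0..\<delta>}. \<exists>s\<in>{0..1}. g s = q (a0, b0, t0 + (-1) * v)"
    proof
      fix v assume v: "v \<in> {0..\<delta>}"
      have i1: "tau \<epsilon> \<le> t0 - v" "t0 - v \<le> tau 0" using v tau0 unfolding \<delta>_def by auto
      have "\<exists>x\<ge>0. x \<le> \<epsilon> \<and> tau x = t0 - v" by (rule IVT2'[OF i1 _ tc]) (use eps in simp)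
      then obtain s0 where "0 \<le> s0" "s0 \<le> \<epsilon>" "tau s0 = t0 - v" by blast
      thus "\<exists>s\<in>{0..1}. g s = q (a0, b0, t0 + (-1) * v)" using hit by auto
    qed
    moreover have "\<delta> > 0" "t0 - \<delta> \<ge> 0" "t0 + \<delta> \<le> 1" using lt t0 te unfolding \<delta>_def by auto
    ultimately show ?thesis by blast
  qed
qed

end


context jsetup begin

lemma pair_contra:
  assumes I: "ga ` {0..1} \<inter> gb ` {0..1} = {p}" and p: "p = q (a0, b0, t0)"
  and a0: "a0 \<in> C1" and b0: "b0 \<in> C2"
  and da: "\<delta>a > 0" "t0 - \<delta>a \<ge> 0" "t0 + \<delta>a \<le> 1" and db: "\<delta>b > 0"
  and d: "d \<in> {-1, 1::real}"
  and ha: "\<forall>v\<in>{0..\<delta>a}. \<exists>s\<in>{0..1}. ga s = q (a0, b0, t0 + d * v)"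
  and hb: "\<forall>v\<in>{0..\<delta>b}. \<exists>s\<in>{0..1}. gb s = q (a0, b0, t0 + d * v)"
  shows False
proof -
  define v where "v = min \<delta>a \<delta>b"
  have v: "v > 0" "v \<in> {0..\<delta>a}" "v \<in> {0..\<delta>b}" unfolding v_def using da db by auto
  obtain s1 where s1: "s1 \<in> {0..1}" "ga s1 = q (a0, b0, t0 + d * v)" using ha v by blast
  obtain s2 where s2: "s2 \<in> {0..1}" "gb s2 = q (a0, b0, t0 + d * v)" using hb v by blast
  have "q (a0, b0, t0 + d * v) \<in> ga ` {0..1} \<inter> gb ` {0..1}" using s1 s2 by (metis IntI image_eqI)
  hence e: "q (a0, b0, t0 + d * v) = q (a0, b0, t0)" using I p by simp
  have r1: "t0 + d * v \<in> {0..1}" using d v da by auto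
  have r2: "t0 \<in> {0..1}" using da by auto
  have "t0 + d * v = t0" using arg_cong[OF e, of pi] pi_q[OF a0 b0 r1] pi_q[OF a0 b0 r2] by simp
  thus False using d v by auto
qed

lemma nonbranch:
  assumes pT: "p \<in> topspace T" and pi: "0 < pi p" "pi p < 1"
  shows "\<not> branch T p"
proof
  assume "branch T p"
  then obtain g1 g2 g3 where g: "\<forall>g\<in>{g1, g2, g3}. pathin T g \<and> inj_on g {0..1} \<and> g 0 = p"
    and i: "g1 ` {0..1} \<inter> g2 ` {0..1} = {p}" "g1 ` {0..1} \<inter> g3 ` {0..1} = {p}" "g2 ` {0..1} \<inter> g3 ` {0..1} = {p}"
    unfolding branch_def by blast
  obtain a0 b0 t0 where abt: "a0 \<in> C1" "b0 \<in> C2" "t0 \<in> {0..1}" "p = q (a0, b0, t0)" using rep[OF pT] by blast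
  have t0: "0 < t0" "t0 < 1" using pi pi_q[OF abt(1-3)] abt(4) by auto
  have L: "\<exists>\<delta>>0. t0 - \<delta> \<ge> 0 \<and> t0 + \<delta> \<le> 1 \<and>
           (\<exists>d\<in>{-1,1::real}. \<forall>v\<in>{0..\<delta>}. \<exists>s\<in>{0..1}. g s = q (a0, b0, t0 + d * v))" if "g \<in> {g1, g2, g3}" for g
    using g that local_dir[OF _ _ _ abt(1,2) t0 abt(4)] by blast
  obtain d1 e1 where 1: "e1 > 0" "t0 - e1 \<ge> 0" "t0 + e1 \<le> 1" "d1 \<in> {-1,1}" "\<forall>v\<in>{0..e1}. \<exists>s\<in>{0..1}. g1 s = q (a0, b0, t0 + d1 * v)"
    using L[of g1] by blast
  obtain d2 e2 where 2: "e2 > 0" "t0 - e2 \<ge> 0" "t0 + e2 \<le> 1" "d2 \<in> {-1,1}" "\<forall>v\<in>{0..e2}. \<exists>s\<in>{0..1}. g2 s = q (a0, b0, t0 + d2 * v)"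
    using L[of g2] by blast
  obtain d3 e3 where 3: "e3 > 0" "t0 - e3 \<ge> 0" "t0 + e3 \<le> 1" "d3 \<in> {-1,1}" "\<forall>v\<in>{0..e3}. \<exists>s\<in>{0..1}. g3 s = q (a0, b0, t0 + d3 * v)"
    using L[of g3] by blast
  have "d1 = d2 \<or> d1 = d3 \<or> d2 = d3" using 1(4) 2(4) 3(4) by auto
  thus False
  proof (elim disjE)
    assume "d1 = d2" thus False using pair_contra[OF i(1) abt(4) abt(1,2) 1(1-3) 2(1) 1(4) 1(5)] 2(5) by simp
  next
    assume "d1 = d3" thus False using pair_contra[OF i(2) abt(4) abt(1,2) 1(1-3) 3(1) 1(4) 1(5)] 3(5) by simp
  next
    assume "d2 = d3" thus False using pair_contra[OF i(3) abt(4) abt(1,2) 2(1-3) 3(1) 2(4) 2(5)] 3(5) by simp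
  qed
qed

lemma branch_iff: assumes "z \<in> topspace T" shows "branch T z \<longleftrightarrow> z \<in> C1 \<union> C2"
proof
  assume b: "branch T z"
  show "z \<in> C1 \<union> C2"
  proof (rule ccontr)
    assume "z \<notin> C1 \<union> C2"
    hence "pi z \<noteq> 0" "pi z \<noteq> 1" using assms C1_pi C2_pi by auto
    hence "0 < pi z" "pi z < 1" using pi_range[OF assms] by auto
    thus False using nonbranch[OF assms] b by blast
  qed
next
  assume "z \<in> C1 \<union> C2" thus "branch T z" using branch_C1 branch_C2 by blast
qed

definition Rel :: "'b \<Rightarrow> 'b \<Rightarrow> bool" where
  "Rel x y \<longleftrightarrow> (\<exists>g. pathin T g \<and> g 0 = x \<and> g 1 = y \<and> (\<forall>s\<in>{0<..<1}. g s \<notin> C1 \<union> C2))"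

lemma Rel_12: assumes a: "a \<in> C1" and b: "b \<in> C2" shows "Rel a b"
proof -
  define g where "g = (\<lambda>s. q (a, b, s))"
  have "pathin T g" unfolding g_def using qpath[OF a b id01] .
  moreover have "g 0 = a" "g 1 = b" unfolding g_def using ends a b by auto
  moreover have "g s \<notin> C1 \<union> C2" if "s \<in> {0<..<1}" for s
  proof -
    have s: "s \<in> {0..1}" using that by auto
    have "pi (g s) = s" unfolding g_def using pi_q[OF a b s] .
    hence "g s \<notin> {z \<in> topspace T. pi z = 0}" "g s \<notin> {z \<in> topspace T. pi z = 1}" using that by auto
    thus ?thesis using C1_pi C2_pi by blast
  qed
  ultimately show ?thesis unfolding Rel_def by blast
qed

lemma Rel_11: assumes x: "x \<in> C1" and y: "y \<in> C1" and R: "Rel x y" shows "x = y"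
proof -
  obtain g where g: "pathin T g" "g 0 = x" "g 1 = y" "\<forall>s\<in>{0<..<1}. g s \<notin> C1 \<union> C2"
    using R unfolding Rel_def by blast
  have gV: "g s \<in> V1" if "s \<in> {0..1}" for s
  proof -
    have gs: "g s \<in> topspace T" using pathin_img[OF g(1)] that by auto
    have "g s \<notin> C2"
    proof (cases "s = 0 \<or> s = 1")
      case True thus ?thesis using g x y disj by auto
    next
      case False thus ?thesis using g(4) that by auto
    qed
    hence "pi (g s) \<noteq> 1" using gs C2_pi by auto
    thus ?thesis using pi_range[OF gs] gs unfolding V1_def by auto
  qed
  have c: "continuous_map (top_of_set {0..1}) (subtopology T C1) (alpha \<circ> g)"
  proof (rule continuous_map_compose[OF _ alpha_cont])
    show "continuous_map (top_of_set {0..1}) (subtopology T V1) g"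
      by (rule continuous_map_into_subtopology) (use g(1) gV in \<open>auto simp: pathin_def\<close>)
  qed
  have "(alpha \<circ> g) 0 = (alpha \<circ> g) 1" by (rule cantor_path_const[OF cant1 c connected_Icc]) auto
  moreover have "alpha z = z" if "z \<in> C1" for z
  proof -
    obtain b where b: "b \<in> C2" using ne2 by blast
    show ?thesis using alpha_q[OF that b, of 0] ends that b by simp
  qed
  ultimately show ?thesis using g x y by simp
qed

lemma Rel_22: assumes x: "x \<in> C2" and y: "y \<in> C2" and R: "Rel x y" shows "x = y"
proof -
  obtain g where g: "pathin T g" "g 0 = x" "g 1 = y" "\<forall>s\<in>{0<..<1}. g s \<notin> C1 \<union> C2"
    using R unfolding Rel_def by blast
  have gV: "g s \<in> V2" if "s \<in> {0..1}" for s
  proof -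
    have gs: "g s \<in> topspace T" using pathin_img[OF g(1)] that by auto
    have "g s \<notin> C1"
    proof (cases "s = 0 \<or> s = 1")
      case True thus ?thesis using g x y disj by auto
    next
      case False thus ?thesis using g(4) that by auto
    qed
    hence "pi (g s) \<noteq> 0" using gs C1_pi by auto
    thus ?thesis using pi_range[OF gs] gs unfolding V2_def by auto
  qed
  have c: "continuous_map (top_of_set {0..1}) (subtopology T C2) (beta \<circ> g)"
  proof (rule continuous_map_compose[OF _ beta_cont])
    show "continuous_map (top_of_set {0..1}) (subtopology T V2) g"
      by (rule continuous_map_into_subtopology) (use g(1) gV in \<open>auto simp: pathin_def\<close>)
  qed
  have "(beta \<circ> g) 0 = (beta \<circ> g) 1" by (rule cantor_path_const[OF cant2 c connected_Icc]) auto
  moreover have "beta z = z" if "z \<in> C2" for z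
  proof -
    obtain a where a: "a \<in> C1" using ne1 by blast
    show ?thesis using beta_q[OF a that, of 1] ends that a by simp
  qed
  ultimately show ?thesis using g x y by simp
qed

lemma half:
  assumes f: "continuous_map T T f" and f': "continuous_map T T f'"
  and ff': "\<forall>z\<in>topspace T. f' (f z) = z" and f'f: "\<forall>z\<in>topspace T. f (f' z) = z"
  shows "(f ` C1 \<subseteq> C1 \<and> f ` C2 \<subseteq> C2) \<or> (f ` C1 \<subseteq> C2 \<and> f ` C2 \<subseteq> C1)"
proof -
  have injf: "inj_on f (topspace T)" using ff' by (metis inj_onI)
  have injf': "inj_on f' (topspace T)" using f'f by (metis inj_onI)
  have fT: "f z \<in> topspace T" if "z \<in> topspace T" for z using f that unfolding continuous_map_def by auto
  have f'T: "f' z \<in> topspace T" if "z \<in> topspace T" for z using f' that unfolding continuous_map_def by auto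
  have C12: "C1 \<union> C2 \<subseteq> topspace T" using C1sub C2sub by auto
  have fB: "f z \<in> C1 \<union> C2" if "z \<in> C1 \<union> C2" for z
  proof -
    have zT: "z \<in> topspace T" using that C12 by auto
    have "branch T z" using branch_iff[OF zT] that by simp
    hence "branch T (f z)" using branch_hom[OF f injf] by blast
    thus ?thesis using branch_iff[OF fT[OF zT]] by simp
  qed
  have f'B: "f' z \<in> C1 \<union> C2" if "z \<in> C1 \<union> C2" for z
  proof -
    have zT: "z \<in> topspace T" using that C12 by auto
    have "branch T z" using branch_iff[OF zT] that by simp
    hence "branch T (f' z)" using branch_hom[OF f' injf'] by blast
    thus ?thesis using branch_iff[OF f'T[OF zT]] by simp
  qed
  have fRel: "Rel (f x) (f y)" if R: "Rel x y" for x y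
  proof -
    obtain g where g: "pathin T g" "g 0 = x" "g 1 = y" "\<forall>s\<in>{0<..<1}. g s \<notin> C1 \<union> C2"
      using R unfolding Rel_def by blast
    have "pathin T (f \<circ> g)" using pathin_compose[OF g(1) f] .
    moreover have "(f \<circ> g) s \<notin> C1 \<union> C2" if s: "s \<in> {0<..<1}" for s
    proof
      assume h: "(f \<circ> g) s \<in> C1 \<union> C2"
      have gs: "g s \<in> topspace T" using pathin_img[OF g(1)] s by auto
      have "f' (f (g s)) \<in> C1 \<union> C2" using f'B h by simp
      hence "g s \<in> C1 \<union> C2" using ff' gs by simp
      thus False using g(4) s by blast
    qed
    ultimately show ?thesis unfolding Rel_def using g by auto
  qed
  obtain a0 where a0: "a0 \<in> C1" using ne1 by blast
  obtain b0 where b0: "b0 \<in> C2" using ne2 by blast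
  have bk: "u = v" if "u \<in> C1 \<union> C2" "v \<in> C1 \<union> C2" "f u = f v" for u v
    using that ff' C12 by (metis subsetD)
  have D: "u \<noteq> v" if "u \<in> C1" "v \<in> C2" for u v using disj that by auto
  show ?thesis
  proof (cases "f a0 \<in> C1")
    case True
    have 2: "f b \<in> C2" if b: "b \<in> C2" for b
    proof (rule ccontr)
      assume "f b \<notin> C2"
      hence "f b \<in> C1" using fB b by auto
      hence "f a0 = f b" using Rel_11[OF True _ fRel[OF Rel_12[OF a0 b]]] by simp
      hence "a0 = b" using bk a0 b by blast
      thus False using D a0 b by blast
    qed
    have 1: "f a \<in> C1" if a: "a \<in> C1" for a
    proof (rule ccontr)
      assume "f a \<notin> C1"
      hence "f a \<in> C2" using fB a by auto
      hence "f a = f b0" using Rel_22[OF _ 2[OF b0] fRel[OF Rel_12[OF a b0]]] by simp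
      hence "a = b0" using bk a b0 by blast
      thus False using D a b0 by blast
    qed
    show ?thesis using 1 2 by blast
  next
    case False
    hence F: "f a0 \<in> C2" using fB a0 by auto
    have 2: "f b \<in> C1" if b: "b \<in> C2" for b
    proof (rule ccontr)
      assume "f b \<notin> C1"
      hence "f b \<in> C2" using fB b by auto
      hence "f a0 = f b" using Rel_22[OF F _ fRel[OF Rel_12[OF a0 b]]] by simp
      hence "a0 = b" using bk a0 b by blast
      thus False using D a0 b by blast
    qed
    have 1: "f a \<in> C2" if a: "a \<in> C1" for a
    proof (rule ccontr)
      assume "f a \<notin> C2"
      hence "f a \<in> C1" using fB a by auto
      hence "f a = f b0" using Rel_11[OF _ 2[OF b0] fRel[OF Rel_12[OF a b0]]] by simp
      hence "a = b0" using bk a b0 by blast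
      thus False using D a b0 by blast
    qed
    show ?thesis using 1 2 by blast
  qed
qed

lemma join_perm:
  assumes f: "continuous_map T T f" and f': "continuous_map T T f'"
  and ff': "\<forall>z\<in>topspace T. f' (f z) = z" and f'f: "\<forall>z\<in>topspace T. f (f' z) = z"
  shows "(f ` C1 = C1 \<and> f ` C2 = C2) \<or> (f ` C1 = C2 \<and> f ` C2 = C1)"
proof -
  have h1: "(f ` C1 \<subseteq> C1 \<and> f ` C2 \<subseteq> C2) \<or> (f ` C1 \<subseteq> C2 \<and> f ` C2 \<subseteq> C1)"
    using half[OF f f' ff' f'f] .
  have h2: "(f' ` C1 \<subseteq> C1 \<and> f' ` C2 \<subseteq> C2) \<or> (f' ` C1 \<subseteq> C2 \<and> f' ` C2 \<subseteq> C1)"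
    using half[OF f' f f'f ff'] .
  obtain a0 where a0: "a0 \<in> C1" using ne1 by blast
  have a0T: "a0 \<in> topspace T" using a0 C1sub by auto
  have C1T: "\<And>z. z \<in> C1 \<Longrightarrow> f (f' z) = z" using f'f C1sub by auto
  have C2T: "\<And>z. z \<in> C2 \<Longrightarrow> f (f' z) = z" using f'f C2sub by auto
  show ?thesis
  proof (cases "f ` C1 \<subseteq> C1 \<and> f ` C2 \<subseteq> C2")
    case True
    have "f' ` C1 \<subseteq> C1 \<and> f' ` C2 \<subseteq> C2"
    proof (rule ccontr)
      assume "\<not> ?thesis"
      hence "f' ` C1 \<subseteq> C2" using h2 by blast
      hence "f' (f a0) \<in> C2" using True a0 by blast
      thus False using ff' a0T a0 disj by auto
    qed
    hence "C1 \<subseteq> f ` C1" "C2 \<subseteq> f ` C2" using C1T C2T by (metis image_eqI image_subset_iff subsetI)+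
    thus ?thesis using True by blast
  next
    case False
    hence F: "f ` C1 \<subseteq> C2 \<and> f ` C2 \<subseteq> C1" using h1 by blast
    have "f' ` C1 \<subseteq> C2 \<and> f' ` C2 \<subseteq> C1"
    proof (rule ccontr)
      assume "\<not> ?thesis"
      hence "f' ` C2 \<subseteq> C2" using h2 by blast
      hence "f' (f a0) \<in> C2" using F a0 by blast
      thus False using ff' a0T a0 disj by auto
    qed
    hence "C2 \<subseteq> f ` C1" "C1 \<subseteq> f ` C2" using C1T C2T by (metis image_eqI image_subset_iff subsetI)+
    thus ?thesis using F by blast
  qed
qed

end


theorem lemma2p1:
  fixes G :: "('a::metric_space \<Rightarrow> 'a) set"
    and x0 :: 'a
    and C1 C2 :: "(real \<Rightarrow> 'a) set set"
  assumes "proper_metric_space TYPE('a)"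
    and "complete (UNIV :: 'a set)"
    and "CAT0_space TYPE('a)"
    and "is_cantor_subspace (cone_topology x0) C1"
    and "is_cantor_subspace (cone_topology x0) C2"
    and "join_of (cone_topology x0) C1 C2"
    and "isometry_group G"
    and "geometric_action G"
  shows "\<exists>H. is_subgroup H G \<and>
           (H = G \<or> (\<exists>h\<in>G - H. G = H \<union> (\<lambda>k. h \<circ> k) ` H)) \<and>
           (\<forall>g\<in>H. boundary_map g ` C1 = C1 \<and> boundary_map g ` C2 = C2)"
proof -
  note comp = assms(2) and cat = assms(3)
  obtain q where q1: "quotient_map (prod_topology (subtopology (cone_topology x0) C1)
               (prod_topology (subtopology (cone_topology x0) C2) (top_of_set {0..1::real}))) (cone_topology x0) q"
    and q2: "\<forall>a\<in>C1. \<forall>b\<in>C2. q (a, b, 0) = a \<and> q (a, b, 1) = b"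
    and q3: "\<forall>a\<in>C1. \<forall>b\<in>C2. \<forall>t\<in>{0..1}. \<forall>a'\<in>C1. \<forall>b'\<in>C2. \<forall>t'\<in>{0..1}.
              q (a, b, t) = q (a', b', t') \<longleftrightarrow>
              (t = t' \<and> ((0 < t \<and> t < 1 \<and> a = a' \<and> b = b') \<or> (t = 0 \<and> a = a')
                          \<or> (t = 1 \<and> b = b')))"
    using assms(6) unfolding join_of_def by (elim conjE exE) (rule that)
  have J: "jsetup (cone_topology x0) C1 C2 q"
    by (rule jsetup.intro[OF assms(4) assms(5) q1 q2 q3])
  have GI: "\<And>g. g \<in> G \<Longrightarrow> isometry g" and Gid: "id \<in> G"
    and Gc: "\<And>g h. g \<in> G \<Longrightarrow> h \<in> G \<Longrightarrow> g \<circ> h \<in> G" and Gi: "\<And>g. g \<in> G \<Longrightarrow> inv g \<in> G"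
    using assms(7) unfolding isometry_group_def by blast+
  let ?b = "boundary_map"
  have ts: "topspace (cone_topology x0) = visual_boundary TYPE('a)" using topspace_cone[OF cat comp] .
  have bm_comp: "?b (g \<circ> h) \<xi> = ?b g (?b h \<xi>)" for g h :: "'a \<Rightarrow> 'a" and \<xi>
    unfolding boundary_map_def image_image by (simp add: comp_assoc)
  have bm_id: "?b id \<xi> = \<xi>" for \<xi> :: "(real \<Rightarrow> 'a) set" unfolding boundary_map_def by simp
  have perm: "(?b g ` C1 = C1 \<and> ?b g ` C2 = C2) \<or> (?b g ` C1 = C2 \<and> ?b g ` C2 = C1)" if g: "g \<in> G" for g
  proof -
    have ig: "isometry g" "isometry (inv g)" using GI g Gi by auto
    have bij: "bij g" using isometry_inj[OF ig(1)] ig(1) unfolding isometry_def bij_def by simp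
    have ii: "inv (inv g) = g" using inv_inv_eq[OF bij] .
    show ?thesis
    proof (rule jsetup.join_perm[OF J])
      show "continuous_map (cone_topology x0) (cone_topology x0) (?b g)" using bm_continuous[OF cat comp ig(1)] .
      show "continuous_map (cone_topology x0) (cone_topology x0) (?b (inv g))" using bm_continuous[OF cat comp ig(2)] .
      show "\<forall>z\<in>topspace (cone_topology x0). ?b (inv g) (?b g z) = z" using bm_inv[OF ig(1)] by blast
      show "\<forall>z\<in>topspace (cone_topology x0). ?b g (?b (inv g) z) = z" using bm_inv[OF ig(2)] ii by simp
    qed
  qed
  have bminv: "?b (inv g) (?b g \<xi>) = \<xi>" if "g \<in> G" for g \<xi> using bm_inv GI that by blast
  define H where "H = {g \<in> G. ?b g ` C1 = C1 \<and> ?b g ` C2 = C2}"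
  have sub: "is_subgroup H G"
    unfolding is_subgroup_def
  proof (intro conjI ballI)
    show "H \<subseteq> G" unfolding H_def by auto
    show "id \<in> H" unfolding H_def using Gid bm_id by simp
    fix g assume g: "g \<in> H"
    show "inv g \<in> H"
    proof -
      have gG: "g \<in> G" and g1: "?b g ` C1 = C1" and g2: "?b g ` C2 = C2" using g unfolding H_def by auto
      have "?b (inv g) ` C1 = C1" using arg_cong[OF g1, of "image (?b (inv g))"] bminv[OF gG]
        by (simp add: image_image)
      moreover have "?b (inv g) ` C2 = C2" using arg_cong[OF g2, of "image (?b (inv g))"] bminv[OF gG]
        by (simp add: image_image)
      ultimately show ?thesis unfolding H_def using Gi[OF gG] by simp
    qed
  next
    fix g h assume g: "g \<in> H" and h: "h \<in> H"
    show "g \<circ> h \<in> H" using g h Gc unfolding H_def by (auto simp: bm_comp image_image[symmetric])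
  qed
  have idx: "H = G \<or> (\<exists>h\<in>G - H. G = H \<union> (\<lambda>k. h \<circ> k) ` H)"
  proof (cases "H = G")
    case True thus ?thesis by simp
  next
    case False
    then obtain h where h: "h \<in> G" "h \<notin> H" using sub unfolding is_subgroup_def by blast
    have hs: "?b h ` C1 = C2" "?b h ` C2 = C1" using perm[OF h(1)] h unfolding H_def by auto
    have "G = H \<union> (\<lambda>k. h \<circ> k) ` H"
    proof
      show "H \<union> (\<lambda>k. h \<circ> k) ` H \<subseteq> G" using Gc h(1) unfolding H_def by auto
      show "G \<subseteq> H \<union> (\<lambda>k. h \<circ> k) ` H"
      proof
        fix k assume k: "k \<in> G"
        show "k \<in> H \<union> (\<lambda>k. h \<circ> k) ` H"
        proof (cases "k \<in> H")
          case True thus ?thesis by simp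
        next
          case False
          have ks: "?b k ` C1 = C2" "?b k ` C2 = C1" using perm[OF k] False k unfolding H_def by auto
          have r1: "?b (inv h) ` C2 = C1" using arg_cong[OF hs(1), of "image (?b (inv h))"] bminv[OF h(1)]
            by (simp add: image_image)
          have r2: "?b (inv h) ` C1 = C2" using arg_cong[OF hs(2), of "image (?b (inv h))"] bminv[OF h(1)]
            by (simp add: image_image)
          have "?b (inv h \<circ> k) ` C1 = C1" using ks r1 by (simp add: bm_comp image_image[symmetric])
          moreover have "?b (inv h \<circ> k) ` C2 = C2" using ks r2 by (simp add: bm_comp image_image[symmetric])
          ultimately have m: "inv h \<circ> k \<in> H" unfolding H_def using Gc[OF Gi[OF h(1)] k] by simp
          have "surj h" using GI[OF h(1)] unfolding isometry_def by simp
          hence "h \<circ> (inv h \<circ> k) = k" by (simp add: comp_assoc[symmetric] surj_iff)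
          thus ?thesis using m by (metis UnI2 image_eqI)
        qed
      qed
    qed
    thus ?thesis using h by blast
  qed
  have "\<forall>g\<in>H. ?b g ` C1 = C1 \<and> ?b g ` C2 = C2" unfolding H_def by blast
  thus ?thesis using sub idx by blast
qed

end
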